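(* Let $\mathbf V$ be a finite-dimensional real Lie algebra with basis $(v^i)$ and bracket $[v^i,v^j]=C^{ij}_k v^k$, and let $\langle h^1\rangle\oplus\mathbf V$ be the central extension $$[h^1,v]=0\ \ \forall v\in\mathbf V,\qquad [v^i,v^j]=\Omega_0^{ij}h^1+C^{ij}_kv^k,\tag{E}$$ where $\Omega_0=(\Omega_0^{ij})$ is an antisymmetric matrix defining a Lie algebra 2-cocycle of $\mathbf V$. Let $\alpha,\beta$ be two commuting derivations of $\mathbf V$, and denote also by $\alpha,\beta$ their matrices $(\alpha^i_j)$, $(\beta^i_j)$ defined by $\alpha(v^i)=\alpha^i_jv^j$, $\beta(v^i)=\beta^i_jv^j$. Let $\tilde G=\langle h_1\rangle\oplus\mathbf V^*$ be the Lie group with product $(t h_1,\xi)\ast(t'h_1,\xi')=\big((t+t')h_1,\ e^{t\alpha^*}\xi'+e^{-t'\beta^*}\xi\big)$, equipped with the Lie bialgebra cocycle $\delta$ on its Lie algebra whose dual $\delta^*$ is the bracket (E) on $\langle h^1\rangle\oplus\mathbf V$. Then the global Poisson–Lie bracket on $\tilde G$ with cocycle $\delta$ is given, in the coordinate functions $h^1,v^i$, by $$\{h^1,v^j\}=0\ \ \forall j,\qquad \{v^i,v^j\}=\Omega^{ij}(h^1)+C^{ij}_kv^k,$$ where the matrix $\Omega(h^1)=(\Omega^{ij}(h^1))$ is $$\Omega(h^1)=\exp(-h^1\beta)\left(\int_0^{h^1}\exp\big(s(\alpha+\beta)\big)\,\Omega_0\,\big(\exp(s(\alpha+\beta))\big)^{t}\,ds\right)\big(\exp(-h^1\beta)\big)^{t},$$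 with ${}^t$ denoting matrix transposition.
   Context: Summation over repeated indices is assumed. $\alpha^*,\beta^*$ are the dual (transpose) maps on $\mathbf V^*$. The coordinate functions on $\tilde G$ are $h^1$ (with $h^1(th_1,\xi)=t$) and the elements $v^i\in\mathbf V=(\mathbf V^* )^*$ viewed as linear functions on $\mathbf V^*$. In these coordinates the group law gives the coproduct $\Delta(h^1)=h^1\otimes1+1\otimes h^1$, $\Delta(v^i)=e^{h^1\otimes\alpha}(1\otimes v^i)+e^{-\beta\otimes h^1}(v^i\otimes1)$, where $e^{h^1\otimes\alpha}(1\otimes v^i)=\sum_{n\ge0}\frac{(h^1)^n}{n!}\otimes\alpha^n(v^i)$ and $e^{-\beta\otimes h^1}(v^i\otimes1)=\sum_{n\ge0}\frac{(-1)^n}{n!}\beta^n(v^i)\otimes(h^1)^n$. Since $\tilde G$ is simply connected, a Poisson–Lie structure with a given Lie bialgebra cocycle exists and is unique. *)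

theory Defs
  imports "HOL-Analysis.Analysis"
begin

fun matpow :: "real^'n^'n \<Rightarrow> nat \<Rightarrow> real^'n^'n" where
  "matpow A 0 = mat 1"
| "matpow A (Suc k) = A ** matpow A k"

definition mexp :: "real^'n^'n \<Rightarrow> real^'n^'n" where
  "mexp A = (\<Sum>k. (1 / fact k) *\<^sub>R matpow A k)"

definition oint :: "real \<Rightarrow> (real \<Rightarrow> real^'n^'n) \<Rightarrow> real^'n^'n" where
  "oint t f = (if 0 \<le> t then integral {0..t} f else - integral {t..0} f)"

text \<open>C i j k = structure constant C^{ij}_k, so [v^i,v^j] = sum_k C i j k v^k.\<close>
definition lie_structure_constants :: "('n::finite \<Rightarrow> 'n \<Rightarrow> 'n \<Rightarrow> real) \<Rightarrow> bool" where
  "lie_structure_constants C \<longleftrightarrow>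
     (\<forall>i j k. C i j k = - C j i k) \<and>
     (\<forall>i j l m. (\<Sum>k\<in>UNIV. C i j k * C k l m + C j l k * C k i m + C l i k * C k j m) = 0)"

text \<open>Omega0 antisymmetric and a 2-cocycle of V: w([x,y],z) + cyclic = 0.\<close>
definition lie_2cocycle :: "('n::finite \<Rightarrow> 'n \<Rightarrow> 'n \<Rightarrow> real) \<Rightarrow> real^'n^'n \<Rightarrow> bool" where
  "lie_2cocycle C W \<longleftrightarrow>
     (\<forall>i j. W $ i $ j = - W $ j $ i) \<and>
     (\<forall>i j l. (\<Sum>k\<in>UNIV. C i j k * W $ k $ l + C j l k * W $ k $ i + C l i k * W $ k $ j) = 0)"

text \<open>The linear map with alpha(v^i) = sum_j A$i$j v^j is a derivation of V.\<close>
definition is_derivation :: "('n::finite \<Rightarrow> 'n \<Rightarrow> 'n \<Rightarrow> real) \<Rightarrow> real^'n^'n \<Rightarrow> bool" where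
  "is_derivation C A \<longleftrightarrow>
     (\<forall>i j m. (\<Sum>k\<in>UNIV. C i j k * A $ k $ m) =
               (\<Sum>l\<in>UNIV. A $ i $ l * C l j m) + (\<Sum>l\<in>UNIV. A $ j $ l * C i l m))"

text \<open>A point t h_1 + xi is represented as (t, x) with x $ i = xi(v^i) = v^i(xi).
  In these coordinates alpha^* acts by A *v x.\<close>

definition gmul :: "real^'n^'n \<Rightarrow> real^'n^'n \<Rightarrow> real \<times> (real^'n) \<Rightarrow> real \<times> (real^'n) \<Rightarrow> real \<times> (real^'n)" where
  "gmul A B g g' = (fst g + fst g',
       mexp (fst g *\<^sub>R A) *v snd g' + mexp ((- fst g') *\<^sub>R B) *v snd g)"

definition gunit :: "real \<times> (real^'n)" where "gunit = (0, 0)"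

text \<open>Coordinate functions: None is h^1, Some i is v^i.\<close>
fun coord :: "'n option \<Rightarrow> real \<times> (real^'n) \<Rightarrow> real" where
  "coord None p = fst p"
| "coord (Some i) p = snd p $ i"

fun cdir :: "'n::finite option \<Rightarrow> real \<times> (real^'n)" where
  "cdir None = (1, 0)"
| "cdir (Some i) = (0, axis i 1)"

definition pd :: "'n::finite option \<Rightarrow> (real \<times> (real^'n) \<Rightarrow> real) \<Rightarrow> real \<times> (real^'n) \<Rightarrow> real" where
  "pd a f p = frechet_derivative f (at p) (cdir a)"

fun Ck :: "nat \<Rightarrow> ('a::euclidean_space \<Rightarrow> real) \<Rightarrow> bool" where
  "Ck 0 f = continuous_on UNIV f"
| "Ck (Suc k) f = ((\<forall>x. f differentiable (at x)) \<and> continuous_on UNIV f \<and>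
                   (\<forall>b\<in>Basis. Ck k (\<lambda>x. frechet_derivative f (at x) b)))"

definition smooth_fun :: "('a::euclidean_space \<Rightarrow> real) \<Rightarrow> bool" where
  "smooth_fun f \<longleftrightarrow> (\<forall>k. Ck k f)"

text \<open>A bivector field is given by its components P p a b = {x^a, x^b}(p) in the
  coordinates x^a (a :: 'n option); the bracket of functions is
  {f,g} = sum_{a,b} P a b (d_a f)(d_b g).\<close>

type_synonym 'n bivector = "real \<times> (real^'n) \<Rightarrow> 'n option \<Rightarrow> 'n option \<Rightarrow> real"

definition poisson_bivector :: "('n::finite) bivector \<Rightarrow> bool" where
  "poisson_bivector P \<longleftrightarrow>
     (\<forall>a b. smooth_fun (\<lambda>p. P p a b)) \<and>
     (\<forall>p a b. P p a b = - P p b a) \<and>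
     (\<forall>p a b c. (\<Sum>l\<in>UNIV.
          P p l a * pd l (\<lambda>q. P q b c) p + P p l b * pd l (\<lambda>q. P q c a) p
        + P p l c * pd l (\<lambda>q. P q a b) p) = 0)"

text \<open>Multiplicativity: P(g h) = (L_g)_* P(h) + (R_h)_* P(g).\<close>
definition multiplicative :: "real^'n^'n \<Rightarrow> real^'n^'n \<Rightarrow> ('n::finite) bivector \<Rightarrow> bool" where
  "multiplicative A B P \<longleftrightarrow>
     (\<forall>g h a b. P (gmul A B g h) a b =
        (\<Sum>c\<in>UNIV. \<Sum>d\<in>UNIV.
            pd c (\<lambda>k. coord a (gmul A B g k)) h * pd d (\<lambda>k. coord b (gmul A B g k)) h * P h c d)
      + (\<Sum>c\<in>UNIV. \<Sum>d\<in>UNIV.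
            pd c (\<lambda>k. coord a (gmul A B k h)) g * pd d (\<lambda>k. coord b (gmul A B k h)) g * P g c d))"

text \<open>Structure constants of the bracket (E) on <h^1> (+) V = dual of Lie(G~):
  [x^a, x^b] = sum_c ecoef a b c x^c.\<close>
fun ecoef :: "('n \<Rightarrow> 'n \<Rightarrow> 'n \<Rightarrow> real) \<Rightarrow> real^'n^'n \<Rightarrow> 'n option \<Rightarrow> 'n option \<Rightarrow> 'n option \<Rightarrow> real" where
  "ecoef C W (Some i) (Some j) None = W $ i $ j"
| "ecoef C W (Some i) (Some j) (Some k) = C i j k"
| "ecoef C W _ _ _ = 0"

text \<open>The linearization of P at the identity is the cocycle delta whose dual is (E):
  d_e {x^a, x^b} = [x^a, x^b].\<close>
definition has_cocycle :: "('n::finite \<Rightarrow> 'n \<Rightarrow> 'n \<Rightarrow> real) \<Rightarrow> real^'n^'n \<Rightarrow> 'n bivector \<Rightarrow> bool" where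
  "has_cocycle C W P \<longleftrightarrow> (\<forall>a b c. pd c (\<lambda>p. P p a b) gunit = ecoef C W a b c)"

definition poisson_lie_with_cocycle ::
  "real^'n^'n \<Rightarrow> real^'n^'n \<Rightarrow> ('n::finite \<Rightarrow> 'n \<Rightarrow> 'n \<Rightarrow> real) \<Rightarrow> real^'n^'n \<Rightarrow> 'n bivector \<Rightarrow> bool" where
  "poisson_lie_with_cocycle A B C W P \<longleftrightarrow>
     poisson_bivector P \<and> multiplicative A B P \<and> has_cocycle C W P"

definition Omega :: "real^'n^'n \<Rightarrow> real^'n^'n \<Rightarrow> real^'n^'n \<Rightarrow> real \<Rightarrow> real^'n^'n" where
  "Omega A B W t =
     mexp ((- t) *\<^sub>R B)
     ** oint t (\<lambda>s. mexp (s *\<^sub>R (A + B)) ** W ** transpose (mexp (s *\<^sub>R (A + B))))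
     ** transpose (mexp ((- t) *\<^sub>R B))"

fun claimed_bracket :: "real^'n^'n \<Rightarrow> real^'n^'n \<Rightarrow> ('n::finite \<Rightarrow> 'n \<Rightarrow> 'n \<Rightarrow> real) \<Rightarrow> real^'n^'n \<Rightarrow> 'n bivector" where
  "claimed_bracket A B C W p (Some i) (Some j) =
     Omega A B W (fst p) $ i $ j + (\<Sum>k\<in>UNIV. C i j k * snd p $ k)"
| "claimed_bracket A B C W p _ _ = 0"

end

theory Submission
  imports Defs
begin

definition mderiv :: "(real \<Rightarrow> real^'n^'n) \<Rightarrow> real^'n^'n \<Rightarrow> real \<Rightarrow> bool" where
  "mderiv Y Y' t \<longleftrightarrow> (\<forall>i j. ((\<lambda>s. Y s $ i $ j) has_real_derivative Y' $ i $ j) (at t))"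

lemma mderiv_const: "mderiv (\<lambda>s. M) 0 t"
  by (simp add: mderiv_def)

lemma mderiv_add: "mderiv Y Y' t \<Longrightarrow> mderiv Z Z' t \<Longrightarrow> mderiv (\<lambda>s. Y s + Z s) (Y' + Z') t"
  by (auto simp: mderiv_def intro!: derivative_eq_intros)

lemma mderiv_diff: "mderiv Y Y' t \<Longrightarrow> mderiv Z Z' t \<Longrightarrow> mderiv (\<lambda>s. Y s - Z s) (Y' - Z') t"
  by (auto simp: mderiv_def intro!: derivative_eq_intros)

lemma mderiv_minus: "mderiv Y Y' t \<Longrightarrow> mderiv (\<lambda>s. - Y s) (- Y') t"
  by (auto simp: mderiv_def intro!: derivative_eq_intros)

lemma mderiv_transpose: "mderiv Y Y' t \<Longrightarrow> mderiv (\<lambda>s. transpose (Y s)) (transpose Y') t"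
  by (auto simp: mderiv_def transpose_def)

lemma mderiv_mult:
  assumes "mderiv Y Y' t" "mderiv Z Z' t"
  shows "mderiv (\<lambda>s. Y s ** Z s) (Y' ** Z t + Y t ** Z') t"
  unfolding mderiv_def
proof (intro allI)
  fix i j
  have "((\<lambda>s. \<Sum>k\<in>UNIV. Y s $ i $ k * Z s $ k $ j) has_real_derivative
        (\<Sum>k\<in>UNIV. Y t $ i $ k * Z' $ k $ j + Y' $ i $ k * Z t $ k $ j)) (at t)"
    using assms unfolding mderiv_def by (intro DERIV_sum DERIV_mult') auto
  then show "((\<lambda>s. (Y s ** Z s) $ i $ j) has_real_derivative (Y' ** Z t + Y t ** Z') $ i $ j) (at t)"
    by (simp add: matrix_matrix_mult_def sum.distrib add.commute)
qed

lemma mderiv_cong: "mderiv Y Y' t \<Longrightarrow> Y' = Y'' \<Longrightarrow> mderiv Y Y'' t"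
  by simp

lemma mderiv_shift: "mderiv Y Y' (c + t) \<Longrightarrow> mderiv (\<lambda>s. Y (c + s)) Y' t"
  unfolding mderiv_def
proof (intro allI)
  fix i j assume "\<forall>i j. ((\<lambda>s. Y s $ i $ j) has_real_derivative Y' $ i $ j) (at (c + t))"
  then have "((\<lambda>s. Y s $ i $ j) has_real_derivative Y' $ i $ j) (at (c + t))" by blast
  then have "((\<lambda>s. Y (c + s) $ i $ j) has_real_derivative Y' $ i $ j * 1) (at t)"
    by (intro DERIV_chain2[where f="\<lambda>s. Y s $ i $ j"]) (auto intro!: derivative_eq_intros)
  then show "((\<lambda>s. Y (c + s) $ i $ j) has_real_derivative Y' $ i $ j) (at t)" by simp
qed

lemma mderiv_vec:
  fixes Y :: "real \<Rightarrow> real^'n^'n"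
  assumes "mderiv Y Y' t"
  shows "(Y has_vector_derivative Y') (at t)"
  unfolding has_vector_derivative_def
proof (subst has_derivative_componentwise_within, intro ballI)
  fix b :: "real^'n^'n" assume "b \<in> Basis"
  then obtain i j where b: "b = axis i (axis j 1)"
    unfolding Basis_vec_def by auto
  have "((\<lambda>s. Y s $ i $ j) has_real_derivative Y' $ i $ j) (at t)"
    using assms by (simp add: mderiv_def)
  then show "((\<lambda>x. Y x \<bullet> b) has_derivative (\<lambda>x. x *\<^sub>R Y' \<bullet> b)) (at t)"
    by (simp add: b inner_axis has_field_derivative_def mult.commute[of _ "Y' $ i $ j"])
qed

lemma mderiv_cont:
  fixes Y :: "real \<Rightarrow> real^'n^'n"
  assumes "\<And>t. mderiv Y (Y' t) t" shows "continuous_on S Y"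
proof (rule continuous_at_imp_continuous_on, intro ballI)
  fix x show "isCont Y x"
    by (rule has_vector_derivative_continuous[OF mderiv_vec[OF assms]])
qed

lemma sum_pair_UNIV:
  "(\<Sum>x\<in>(UNIV::('a::finite \<times> 'b::finite) set). g x) = (\<Sum>a\<in>UNIV. \<Sum>b\<in>UNIV. g (a,b))"
  using sum.cartesian_product[of "\<lambda>a b. g (a,b)" UNIV UNIV] by simp

lemma ode_zero:
  fixes f :: "'m::finite \<Rightarrow> real \<Rightarrow> real" and K :: "'m \<Rightarrow> 'm \<Rightarrow> real"
  assumes d: "\<And>i t. (f i has_real_derivative (\<Sum>j\<in>UNIV. K i j * f j t)) (at t)"
    and z: "\<And>i. f i 0 = 0"
  shows "f i t = 0"
proof -
  define E where "E s = (\<Sum>i\<in>UNIV. (f i s)^2)" for s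
  define E' where "E' s = (\<Sum>i\<in>UNIV. 2 * f i s * (\<Sum>j\<in>UNIV. K i j * f j s))" for s
  define \<kappa> where "\<kappa> = (\<Sum>i\<in>UNIV. \<Sum>j\<in>UNIV. \<bar>K i j\<bar>)"
  have dE: "(E has_real_derivative E' s) (at s)" for s
    unfolding E_def E'_def
    by (auto intro!: derivative_eq_intros d simp: power2_eq_square mult.assoc)
  have E0: "E 0 = 0" using z by (simp add: E_def)
  have Enn: "0 \<le> E s" for s by (simp add: E_def sum_nonneg)
  have sq_le: "(f i s)^2 \<le> E s" for i s unfolding E_def by (rule member_le_sum) auto
  have kpos: "0 \<le> \<kappa>" unfolding \<kappa>_def by (simp add: sum_nonneg)
  have bound: "\<bar>E' s\<bar> \<le> 2*\<kappa> * E s" for s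
  proof -
    have "\<bar>E' s\<bar> \<le> (\<Sum>i\<in>UNIV. \<bar>2 * f i s * (\<Sum>j\<in>UNIV. K i j * f j s)\<bar>)"
      unfolding E'_def by (rule sum_abs)
    also have "\<dots> \<le> (\<Sum>i\<in>UNIV. \<Sum>j\<in>UNIV. \<bar>K i j\<bar> * (2 * \<bar>f i s\<bar> * \<bar>f j s\<bar>))"
    proof (rule sum_mono)
      fix i
      have "\<bar>2 * f i s * (\<Sum>j\<in>UNIV. K i j * f j s)\<bar> = 2 * \<bar>f i s\<bar> * \<bar>\<Sum>j\<in>UNIV. K i j * f j s\<bar>"
        by (simp add: abs_mult)
      also have "\<dots> \<le> 2 * \<bar>f i s\<bar> * (\<Sum>j\<in>UNIV. \<bar>K i j\<bar> * \<bar>f j s\<bar>)"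
        by (intro mult_left_mono order_trans[OF sum_abs]) (auto simp: abs_mult)
      also have "\<dots> = (\<Sum>j\<in>UNIV. \<bar>K i j\<bar> * (2 * \<bar>f i s\<bar> * \<bar>f j s\<bar>))"
        by (simp add: sum_distrib_left mult_ac)
      finally show "\<bar>2 * f i s * (\<Sum>j\<in>UNIV. K i j * f j s)\<bar> \<le> \<dots>" .
    qed
    also have "\<dots> \<le> (\<Sum>i\<in>UNIV. \<Sum>j\<in>UNIV. \<bar>K i j\<bar> * (2 * E s))"
    proof (intro sum_mono mult_left_mono)
      fix i j
      have "2 * \<bar>f i s\<bar> * \<bar>f j s\<bar> \<le> (f i s)^2 + (f j s)^2"
      proof -
        have "0 \<le> (\<bar>f i s\<bar> - \<bar>f j s\<bar>)^2" by simp
        then show ?thesis by (simp add: power2_diff power2_abs)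
      qed
      then show "2 * \<bar>f i s\<bar> * \<bar>f j s\<bar> \<le> 2 * E s" using sq_le[of i s] sq_le[of j s] by linarith
    qed auto
    also have "\<dots> = 2*\<kappa> * E s" unfolding \<kappa>_def by (simp add: sum_distrib_left sum_distrib_right mult_ac)
    finally show ?thesis .
  qed
  have "E t = 0"
  proof (cases "0 \<le> t")
    case True
    define H where "H s = exp (-(2*\<kappa>) * s) * E s" for s
    have "H t \<le> H 0"
    proof (rule DERIV_nonpos_imp_nonincreasing[OF True])
      fix x
      have "(H has_real_derivative (exp (-(2*\<kappa>) * x) * (E' x - 2*\<kappa> * E x))) (at x)"
        unfolding H_def by (auto intro!: derivative_eq_intros dE simp: algebra_simps)
      moreover have "exp (-(2*\<kappa>) * x) * (E' x - 2*\<kappa> * E x) \<le> 0"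
        using bound[of x] by (intro mult_nonneg_nonpos) auto
      ultimately show "\<exists>y. DERIV H x :> y \<and> y \<le> 0" by blast
    qed
    then have "E t \<le> 0" using E0 by (simp add: H_def mult_le_0_iff)
    then show ?thesis using Enn[of t] by linarith
  next
    case False
    define H where "H s = exp ((2*\<kappa>) * s) * E s" for s
    have "H t \<le> H 0"
    proof (rule DERIV_nonneg_imp_nondecreasing[of t 0 H])
      fix x
      have "(H has_real_derivative (exp ((2*\<kappa>) * x) * (E' x + 2*\<kappa> * E x))) (at x)"
        unfolding H_def by (auto intro!: derivative_eq_intros dE simp: algebra_simps)
      moreover have "exp ((2*\<kappa>) * x) * (E' x + 2*\<kappa> * E x) \<ge> 0"
        using bound[of x] by (intro mult_nonneg_nonneg) auto
      ultimately show "\<exists>y. DERIV H x :> y \<and> y \<ge> 0" by blast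
    qed (use False in simp)
    then have "E t \<le> 0" using E0 by (simp add: H_def mult_le_0_iff)
    then show ?thesis using Enn[of t] by linarith
  qed
  then have "(f i t)^2 = 0" using sq_le[of i t] by (simp add: E_def) 
  then show ?thesis by simp
qed


lemma ifz_mult: "(if b then x else (0::real)) * y = (if b then x * y else 0)"
  by simp

lemma sum_if_const: "(\<Sum>m\<in>S. if c then g m else (0::real)) = (if c then \<Sum>m\<in>S. g m else 0)"
  by simp

lemma mode_zero:
  fixes Y :: "real \<Rightarrow> real^'n^'n"
  assumes d: "\<And>s. mderiv Y (P ** Y s + Y s ** transpose Q) s" and z: "Y 0 = 0"
  shows "Y s = 0"
proof -
  define f where "f ij s = Y s $ fst ij $ snd ij" for ij s
  define K where "K ij lm = (if snd lm = snd ij then P $ fst ij $ fst lm else 0)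
       + (if fst lm = fst ij then Q $ snd ij $ snd lm else 0)" for ij lm :: "'n \<times> 'n"
  have "f ij s = 0" for ij
  proof (rule ode_zero[where K=K and f=f])
    fix ij :: "'n \<times> 'n" and t
    obtain i j where ij: "ij = (i,j)" by fastforce
    have a: "(\<Sum>l\<in>UNIV. \<Sum>m\<in>UNIV. (if m = j then P $ i $ l else 0) * Y t $ l $ m) = (P ** Y t) $ i $ j"
      by (simp add: ifz_mult matrix_matrix_mult_def)
    have b: "(\<Sum>l\<in>UNIV. \<Sum>m\<in>UNIV. (if l = i then Q $ j $ m else 0) * Y t $ l $ m) = (Y t ** transpose Q) $ i $ j"
      by (simp add: ifz_mult sum_if_const matrix_matrix_mult_def transpose_def) (simp add: mult.commute)
    have "(\<Sum>lm\<in>UNIV. K ij lm * f lm t) = (\<Sum>l\<in>UNIV. \<Sum>m\<in>UNIV. (if m = j then P $ i $ l else 0) * Y t $ l $ m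
        + (if l = i then Q $ j $ m else 0) * Y t $ l $ m)"
      by (simp only: sum_pair_UNIV K_def f_def ij fst_conv snd_conv distrib_right)
    also have "\<dots> = (P ** Y t + Y t ** transpose Q) $ i $ j"
      by (simp only: sum.distrib a b vector_add_component)
    finally have e: "(\<Sum>lm\<in>UNIV. K ij lm * f lm t) = (P ** Y t + Y t ** transpose Q) $ i $ j" .
    have fij: "f ij = (\<lambda>s. Y s $ i $ j)" by (simp add: fun_eq_iff f_def ij)
    show "(f ij has_real_derivative (\<Sum>lm\<in>UNIV. K ij lm * f lm t)) (at t)"
      using d[of t] unfolding e fij mderiv_def by blast
  next
    show "\<And>ij. f ij 0 = 0" by (simp add: f_def z)
  qed
  then have "Y s $ i $ j = 0" for i j unfolding f_def by (metis fst_conv snd_conv)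
  then show ?thesis by (simp add: vec_eq_iff)
qed

lemma matpow_scaleR: "matpow (c *\<^sub>R A) k = c^k *\<^sub>R matpow A k"
  by (induction k) (simp_all add: matrix_scalar_ac scalar_matrix_assoc[symmetric])

lemma matpow_bound: "\<bar>matpow A k $ i $ j\<bar> \<le> (\<Sum>a\<in>UNIV. \<Sum>b\<in>UNIV. \<bar>A $ a $ b\<bar>) ^ k"
proof (induction k arbitrary: i j)
  case 0
  then show ?case by (simp add: mat_def)
next
  case (Suc k)
  let ?m = "(\<Sum>a\<in>UNIV. \<Sum>b\<in>UNIV. \<bar>A $ a $ b\<bar>)"
  have "\<bar>matpow A (Suc k) $ i $ j\<bar> = \<bar>\<Sum>l\<in>UNIV. A $ i $ l * matpow A k $ l $ j\<bar>"
    by (simp add: matrix_matrix_mult_def)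
  also have "\<dots> \<le> (\<Sum>l\<in>UNIV. \<bar>A $ i $ l\<bar> * ?m ^ k)"
    by (rule order_trans[OF sum_abs], rule sum_mono) (auto simp: abs_mult intro!: mult_left_mono Suc.IH)
  also have "\<dots> = (\<Sum>l\<in>UNIV. \<bar>A $ i $ l\<bar>) * ?m ^ k" by (simp add: sum_distrib_right)
  also have "\<dots> \<le> ?m * ?m ^ k"
    by (intro mult_right_mono) (auto intro!: member_le_sum sum_nonneg zero_le_power)
  finally show ?case by simp
qed

lemma vec_sums:
  fixes f :: "nat \<Rightarrow> real^'n^'m"
  assumes "\<And>i j. (\<lambda>k. f k $ i $ j) sums c i j"
  shows "f sums (\<chi> i j. c i j)"
  unfolding sums_def
proof (rule vec_tendstoI)
  fix i
  show "((\<lambda>n. (\<Sum>k<n. f k) $ i) \<longlongrightarrow> (\<chi> i j. c i j) $ i) sequentially"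
    using assms by (auto simp: sums_def intro!: vec_tendstoI)
qed

lemma mexp_coef_summable:
  "summable (\<lambda>k. (matpow A k $ i $ j / fact k) * y^k)"
proof (rule summable_comparison_test)
  let ?m = "(\<Sum>a\<in>UNIV. \<Sum>b\<in>UNIV. \<bar>A $ a $ b\<bar>)"
  show "summable (\<lambda>k. inverse (fact k) * (?m * \<bar>y\<bar>)^k)" by (rule summable_exp)
  show "\<exists>N. \<forall>n\<ge>N. norm (matpow A n $ i $ j / fact n * y ^ n) \<le> inverse (fact n) * (?m * \<bar>y\<bar>) ^ n"
  proof (intro exI allI impI)
    fix n :: nat
    have "norm (matpow A n $ i $ j / fact n * y ^ n) = \<bar>matpow A n $ i $ j\<bar> * \<bar>y\<bar>^n / fact n"
      by (simp add: abs_mult power_abs)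
    also have "\<dots> \<le> ?m^n * \<bar>y\<bar>^n / fact n"
      by (intro divide_right_mono mult_right_mono matpow_bound) auto
    finally show "norm (matpow A n $ i $ j / fact n * y ^ n) \<le> inverse (fact n) * (?m * \<bar>y\<bar>) ^ n"
      by (simp add: power_mult_distrib field_simps)
  qed
qed

lemma mexp_entry_sums:
  "(\<lambda>k. (matpow A k $ i $ j / fact k) * s^k) sums (mexp (s *\<^sub>R A) $ i $ j)"
proof -
  define c where "c i j = (\<Sum>k. (matpow A k $ i $ j / fact k) * s^k)" for i j
  have "(\<lambda>k. (1 / fact k) *\<^sub>R matpow (s *\<^sub>R A) k) sums (\<chi> i j. c i j)"
  proof (rule vec_sums)
    fix i j
    show "(\<lambda>k. ((1 / fact k) *\<^sub>R matpow (s *\<^sub>R A) k) $ i $ j) sums c i j"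
      unfolding c_def using summable_sums[OF mexp_coef_summable[of A i j s]]
      by (simp add: matpow_scaleR mult_ac)
  qed
  then have "mexp (s *\<^sub>R A) = (\<chi> i j. c i j)" unfolding mexp_def by (rule sums_unique[symmetric])
  then show ?thesis using summable_sums[OF mexp_coef_summable[of A i j s]] by (simp add: c_def)
qed

lemma mderiv_mexp: "mderiv (\<lambda>s. mexp (s *\<^sub>R A)) (A ** mexp (t *\<^sub>R A)) t"
  unfolding mderiv_def
proof (intro allI)
  fix i j
  define c where "c k = matpow A k $ i $ j / fact k" for k
  have e: "(\<lambda>s. mexp (s *\<^sub>R A) $ i $ j) = (\<lambda>s. \<Sum>k. c k * s^k)"
    using mexp_entry_sums[of A i j] by (auto simp: c_def sums_iff)
  have "((\<lambda>s. \<Sum>k. c k * s^k) has_real_derivative (\<Sum>n. diffs c n * t^n)) (at t)"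
    by (rule termdiffs_strong_converges_everywhere) (unfold c_def, rule mexp_coef_summable)
  moreover have "(\<lambda>n. diffs c n * t^n) sums ((A ** mexp (t *\<^sub>R A)) $ i $ j)"
  proof -
    have "(\<lambda>n. \<Sum>l\<in>UNIV. A $ i $ l * (matpow A n $ l $ j / fact n * t^n)) sums
          (\<Sum>l\<in>UNIV. A $ i $ l * mexp (t *\<^sub>R A) $ l $ j)"
      by (intro sums_sum sums_mult mexp_entry_sums)
    moreover have "diffs c n * t^n = (\<Sum>l\<in>UNIV. A $ i $ l * (matpow A n $ l $ j / fact n * t^n))" for n
    proof -
      have "diffs c n = matpow A (Suc n) $ i $ j / fact n"
        by (simp add: diffs_def c_def field_simps del: of_nat_Suc)
      then have "diffs c n * t^n = (\<Sum>l\<in>UNIV. A $ i $ l * matpow A n $ l $ j) / fact n * t^n"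
        by (simp add: matrix_matrix_mult_def)
      also have "\<dots> = (\<Sum>l\<in>UNIV. A $ i $ l * matpow A n $ l $ j / fact n * t^n)"
        by (simp add: sum_divide_distrib sum_distrib_right)
      also have "\<dots> = (\<Sum>l\<in>UNIV. A $ i $ l * (matpow A n $ l $ j / fact n * t^n))"
        by (rule sum.cong) simp_all
      finally show ?thesis .
    qed
    ultimately show ?thesis by (simp add: matrix_matrix_mult_def)
  qed
  ultimately show "((\<lambda>s. mexp (s *\<^sub>R A) $ i $ j) has_real_derivative (A ** mexp (t *\<^sub>R A)) $ i $ j) (at t)"
    by (simp add: e sums_iff)
qed

lemma mexp_zero: "mexp (0 *\<^sub>R A) = mat 1"
proof -
  have "mexp (0 *\<^sub>R A) $ i $ j = mat 1 $ i $ j" for i j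
    using mexp_entry_sums[of A i j 0] powser_sums_zero[of "\<lambda>k. matpow A k $ i $ j / fact k"]
    by (simp add: sums_iff)
  then show ?thesis by (simp add: vec_eq_iff)
qed


lemma mm_add_r: "(A + B) ** C = A ** C + B ** (C::real^'n^'n)"
  by (simp add: vec_eq_iff matrix_matrix_mult_def sum.distrib distrib_right)
lemma mm_add_l: "A ** (B + C) = A ** B + A ** (C::real^'n^'n)"
  by (simp add: matrix_add_ldistrib)
lemma mm_diff_r: "(A - B) ** C = A ** C - B ** (C::real^'n^'n)"
  by (simp add: vec_eq_iff matrix_matrix_mult_def sum_subtractf left_diff_distrib)
lemma mm_diff_l: "A ** (B - C) = A ** B - A ** (C::real^'n^'n)"
  by (simp add: vec_eq_iff matrix_matrix_mult_def sum_subtractf right_diff_distrib)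
lemma mm_neg_r: "(- A) ** C = - (A ** (C::real^'n^'n))"
  by (simp add: vec_eq_iff matrix_matrix_mult_def sum_negf)
lemma mm_neg_l: "A ** (- C) = - (A ** (C::real^'n^'n))"
  by (simp add: vec_eq_iff matrix_matrix_mult_def sum_negf)
lemma mm_zero_r: "(0::real^'n^'n) ** C = 0"
  by (simp add: vec_eq_iff matrix_matrix_mult_def)
lemma mm_zero_l: "A ** (0::real^'n^'n) = 0"
  by (simp add: vec_eq_iff matrix_matrix_mult_def)
lemma tr_add: "transpose (A + B) = transpose A + transpose (B::real^'n^'n)"
  by (simp add: vec_eq_iff transpose_def)
lemma tr_diff: "transpose (A - B) = transpose A - transpose (B::real^'n^'n)"
  by (simp add: vec_eq_iff transpose_def)
lemma tr_neg: "transpose (- A) = - transpose (A::real^'n^'n)"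
  by (simp add: vec_eq_iff transpose_def)
lemma tr_zero: "transpose (0::real^'n^'n) = 0"
  by (simp add: vec_eq_iff transpose_def)

lemmas malg = mm_add_r mm_add_l mm_diff_r mm_diff_l mm_neg_r mm_neg_l mm_zero_r mm_zero_l
  tr_add tr_diff tr_neg tr_zero matrix_transpose_mul matrix_mul_assoc

lemma mode_zero':
  fixes Y :: "real \<Rightarrow> real^'n^'n"
  assumes d: "\<And>s. mderiv Y (P ** Y s) s" and z: "Y 0 = 0"
  shows "Y s = 0"
  by (rule mode_zero[where P=P and Q=0]) (use d z in \<open>simp_all add: tr_zero mm_zero_l\<close>)

lemma mexp_0: "mexp 0 = mat 1"
  using mexp_zero[of 0] by simp

lemma mderiv_mexp_neg: "mderiv (\<lambda>s. mexp ((-s) *\<^sub>R A)) (- (A ** mexp ((-t) *\<^sub>R A))) t"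
  using mderiv_mexp[of "-A" t] by (simp add: mm_neg_r)

lemma mexp_comm:
  fixes P Q :: "real^'n^'n"
  assumes "P ** Q = Q ** P"
  shows "mexp (s *\<^sub>R P) ** Q = Q ** mexp (s *\<^sub>R P)"
proof -
  let ?Y = "\<lambda>s. mexp (s *\<^sub>R P) ** Q - Q ** mexp (s *\<^sub>R P)"
  have "?Y s = 0"
  proof (rule mode_zero'[where P=P and Y="?Y"])
    fix s
    show "mderiv ?Y (P ** ?Y s) s"
      apply (rule mderiv_cong)
       apply (rule mderiv_diff mderiv_mult mderiv_const mderiv_mexp)+
      using assms by (simp add: malg)
  next
    show "?Y 0 = 0" by (simp add: mexp_0)
  qed
  then show ?thesis by simp
qed

lemma mexp_neg:
  fixes P :: "real^'n^'n"
  shows "mexp ((-s) *\<^sub>R P) ** mexp (s *\<^sub>R P) = mat 1"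
proof -
  let ?Y = "\<lambda>s. mexp ((-s) *\<^sub>R P) ** mexp (s *\<^sub>R P) - mat 1"
  have "?Y s = 0"
  proof (rule mode_zero'[where P=0 and Y="?Y"])
    fix s
    have c: "mexp ((-s) *\<^sub>R P) ** P = P ** mexp ((-s) *\<^sub>R P)"
      by (rule mexp_comm) simp
    show "mderiv ?Y (0 ** ?Y s) s"
      apply (rule mderiv_cong)
       apply (rule mderiv_diff mderiv_mult mderiv_const mderiv_mexp mderiv_mexp_neg)+
      using c apply (simp add: malg)
      done
  next
    show "?Y 0 = 0" by (simp add: mexp_0)
  qed
  then show ?thesis by simp
qed

lemma mexp_add:
  fixes P :: "real^'n^'n"
  shows "mexp ((a + s) *\<^sub>R P) = mexp (a *\<^sub>R P) ** mexp (s *\<^sub>R P)"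
proof -
  let ?Y = "\<lambda>s. mexp ((a + s) *\<^sub>R P) - mexp (a *\<^sub>R P) ** mexp (s *\<^sub>R P)"
  have "?Y s = 0"
  proof (rule mode_zero'[where P=P and Y="?Y"])
    fix s
    have c: "mexp (a *\<^sub>R P) ** P = P ** mexp (a *\<^sub>R P)"
      by (rule mexp_comm) simp
    show "mderiv ?Y (P ** ?Y s) s"
      apply (rule mderiv_cong)
       apply (rule mderiv_diff mderiv_mult mderiv_const mderiv_mexp mderiv_shift[where Y="\<lambda>s. mexp (s *\<^sub>R P)"])+
      by (simp add: malg c)
  next
    show "?Y 0 = 0" by (simp add: mexp_0)
  qed
  then show ?thesis by simp
qed

lemma mexp_sum:
  fixes P Q :: "real^'n^'n"
  assumes "P ** Q = Q ** P"
  shows "mexp ((-s) *\<^sub>R Q) ** mexp (s *\<^sub>R (P + Q)) = mexp (s *\<^sub>R P)"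
proof -
  let ?Y = "\<lambda>s. mexp ((-s) *\<^sub>R Q) ** mexp (s *\<^sub>R (P + Q)) - mexp (s *\<^sub>R P)"
  have "?Y s = 0"
  proof (rule mode_zero'[where P=P and Y="?Y"])
    fix s
    have c1: "mexp ((-s) *\<^sub>R Q) ** P = P ** mexp ((-s) *\<^sub>R Q)"
      by (rule mexp_comm) (simp add: assms)
    have c2: "mexp ((-s) *\<^sub>R Q) ** Q = Q ** mexp ((-s) *\<^sub>R Q)"
      by (rule mexp_comm) simp
    show "mderiv ?Y (P ** ?Y s) s"
      apply (rule mderiv_cong)
       apply (rule mderiv_diff mderiv_mult mderiv_const mderiv_mexp mderiv_mexp_neg)+
      using c1 c2 by (simp add: malg)
  next
    show "?Y 0 = 0" by (simp add: mexp_0)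
  qed
  then show ?thesis by simp
qed

lemma vec_mderiv:
  fixes Y :: "real \<Rightarrow> real^'n^'n"
  assumes "(Y has_vector_derivative Y') (at t)"
  shows "mderiv Y Y' t"
  unfolding mderiv_def
proof (intro allI)
  fix i j
  have "((\<lambda>s. Y s $ i) has_vector_derivative Y' $ i) (at t)"
    by (rule bounded_linear.has_vector_derivative[OF bounded_linear_vec_nth assms])
  then have "((\<lambda>s. Y s $ i $ j) has_vector_derivative Y' $ i $ j) (at t)"
    by (rule bounded_linear.has_vector_derivative[OF bounded_linear_vec_nth])
  then show "((\<lambda>s. Y s $ i $ j) has_real_derivative Y' $ i $ j) (at t)"
    by (simp add: has_real_derivative_iff_has_vector_derivative)
qed

lemma oint_deriv:
  fixes G :: "real \<Rightarrow> real^'n^'n"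
  assumes cont: "continuous_on UNIV G"
  shows "mderiv (\<lambda>t. oint t G) (G t0) t0"
proof (rule vec_mderiv)
  define c where "c = min 0 t0 - 1"
  define b where "b = max 0 t0 + 1"
  have int: "G integrable_on {x..y}" for x y
    by (rule integrable_continuous_real) (rule continuous_on_subset[OF cont], simp)
  have eq: "oint t G = integral {c..t} G - integral {c..0} G" if "c \<le> t" for t
  proof (cases "0 \<le> t")
    case True
    have "integral {c..0} G + integral {0..t} G = integral {c..t} G"
      by (rule Henstock_Kurzweil_Integration.integral_combine) (use True c_def that int in auto)
    then show ?thesis using True by (simp add: oint_def algebra_simps)
  next
    case False
    have "integral {c..t} G + integral {t..0} G = integral {c..0} G"
      by (rule Henstock_Kurzweil_Integration.integral_combine) (use False c_def that int in auto)
    then show ?thesis using False by (simp add: oint_def algebra_simps)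
  qed
  have "((\<lambda>u. integral {c..u} G) has_vector_derivative G t0) (at t0 within {c..b})"
    by (rule integral_has_vector_derivative) (auto intro: continuous_on_subset[OF cont] simp: c_def b_def)
  then have "((\<lambda>u. integral {c..u} G) has_vector_derivative G t0) (at t0 within {c<..<b})"
    by (rule has_vector_derivative_within_subset) auto
  then have "((\<lambda>u. integral {c..u} G) has_vector_derivative G t0) (at t0)"
    by (subst (asm) has_vector_derivative_within_open) (auto simp: c_def b_def)
  then have "((\<lambda>u. integral {c..u} G - integral {c..0} G) has_vector_derivative G t0 - 0) (at t0)"
    by (intro has_vector_derivative_diff) auto
  then have d: "((\<lambda>u. integral {c..u} G - integral {c..0} G) has_vector_derivative G t0) (at t0)"
    by simp
  show "((\<lambda>t. oint t G) has_vector_derivative G t0) (at t0)"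
  proof (rule has_vector_derivative_transform_within_open[OF d, where S="{c<..}"])
    show "t0 \<in> {c<..}" by (simp add: c_def)
    fix y assume "y \<in> {c<..}"
    then show "integral {c..y} G - integral {c..0} G = oint y G" by (simp add: eq)
  qed simp

qed

definition Fm :: "real^'n^'n \<Rightarrow> real^'n^'n \<Rightarrow> real \<Rightarrow> real^'n^'n" where
  "Fm A W t = mexp (t *\<^sub>R A) ** W ** transpose (mexp (t *\<^sub>R A))"

lemma mderiv_Fm: "mderiv (Fm A W) (A ** Fm A W t + Fm A W t ** transpose A) t"
  unfolding Fm_def
  apply (rule mderiv_cong)
   apply (rule mderiv_mult mderiv_const mderiv_mexp mderiv_transpose)+
  by (simp add: malg)

lemma Fm_0: "Fm A W 0 = W"
  by (simp add: Fm_def mexp_0)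

lemma Fm_add: "Fm A W (t + s) = mexp (t *\<^sub>R A) ** Fm A W s ** transpose (mexp (t *\<^sub>R A))"
  by (simp add: Fm_def mexp_add malg)

lemma mderiv_G: "mderiv (\<lambda>s. mexp (s *\<^sub>R (A + B)) ** W ** transpose (mexp (s *\<^sub>R (A + B))))
   ((A + B) ** mexp (t *\<^sub>R (A + B)) ** W ** transpose (mexp (t *\<^sub>R (A + B)))
   + mexp (t *\<^sub>R (A + B)) ** W ** transpose ((A + B) ** mexp (t *\<^sub>R (A + B)))) t"
  apply (rule mderiv_cong)
   apply (rule mderiv_mult mderiv_const mderiv_mexp mderiv_transpose)+
  by (simp add: malg)

lemma Omega_deriv:
  fixes A B W :: "real^'n^'n"
  assumes AB: "A ** B = B ** A"
  shows "mderiv (Omega A B W) (- (B ** Omega A B W t) - Omega A B W t ** transpose B + Fm A W t) t"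
proof -
  let ?G = "\<lambda>s. mexp (s *\<^sub>R (A + B)) ** W ** transpose (mexp (s *\<^sub>R (A + B)))"
  have cont: "continuous_on UNIV ?G"
    by (rule mderiv_cont[OF mderiv_G])
  have key: "mexp ((-t) *\<^sub>R B) ** mexp (t *\<^sub>R (A + B)) = mexp (t *\<^sub>R A)"
    by (rule mexp_sum[OF AB])
  have F: "Fm A W t = mexp ((-t) *\<^sub>R B) ** mexp (t *\<^sub>R (A + B)) ** W ** transpose (mexp ((-t) *\<^sub>R B) ** mexp (t *\<^sub>R (A + B)))"
    unfolding Fm_def key by (simp add: matrix_mul_assoc)
  show ?thesis
    unfolding Omega_def
    apply (rule mderiv_cong)
     apply (rule mderiv_mult mderiv_const mderiv_mexp_neg mderiv_transpose oint_deriv[OF cont])+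
    unfolding F by (simp add: malg)
qed

lemma Omega_0: "Omega A B W 0 = 0"
  by (simp add: Omega_def oint_def malg)


lemma Omega_add:
  fixes A B W :: "real^'n^'n"
  assumes AB: "A ** B = B ** A"
  shows "Omega A B W (t + s) = mexp (t *\<^sub>R A) ** Omega A B W s ** transpose (mexp (t *\<^sub>R A))
     + mexp ((-s) *\<^sub>R B) ** Omega A B W t ** transpose (mexp ((-s) *\<^sub>R B))"
proof -
  let ?E = "mexp (t *\<^sub>R A)"
  let ?Y = "\<lambda>s. Omega A B W (t + s) - (?E ** Omega A B W s ** transpose ?E
     + mexp ((-s) *\<^sub>R B) ** Omega A B W t ** transpose (mexp ((-s) *\<^sub>R B)))"
  have c0: "?E ** B = B ** ?E" by (rule mexp_comm[OF AB])
  have c1: "X ** ?E ** B = X ** B ** ?E" for X by (simp add: c0 flip: matrix_mul_assoc)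
  have tc0: "transpose B ** transpose ?E = transpose ?E ** transpose B"
    by (simp flip: matrix_transpose_mul add: c0)
  have tc1: "X ** transpose B ** transpose ?E = X ** transpose ?E ** transpose B" for X
    by (simp add: tc0 flip: matrix_mul_assoc)
  have "?Y s = 0"
  proof (rule mode_zero[where P="-B" and Q="-B" and Y="?Y"])
    fix s
    have FF: "Fm A W (t + s) = ?E ** Fm A W s ** transpose ?E" by (rule Fm_add)
    show "mderiv ?Y (- B ** ?Y s + ?Y s ** transpose (- B)) s"
      apply (rule mderiv_cong)
       apply (rule mderiv_diff mderiv_add mderiv_mult mderiv_const mderiv_mexp_neg mderiv_transpose
          mderiv_shift[where Y="Omega A B W", OF Omega_deriv[OF AB]] Omega_deriv[OF AB])+
      unfolding FF by (simp add: malg c0 c1 tc0 tc1 algebra_simps)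
  next
    show "?Y 0 = 0" by (simp add: Omega_0 mexp_0 malg)
  qed
  then show ?thesis by simp
qed

lemma Fm_tr:
  fixes A W :: "real^'n^'n"
  assumes "transpose W = - W"
  shows "transpose (Fm A W t) = - Fm A W t"
  unfolding Fm_def by (simp add: malg assms)

lemma Omega_antisym:
  fixes A B W :: "real^'n^'n"
  assumes AB: "A ** B = B ** A" and W: "transpose W = - W"
  shows "transpose (Omega A B W t) = - Omega A B W t"
proof -
  let ?Y = "\<lambda>t. Omega A B W t + transpose (Omega A B W t)"
  have "?Y t = 0"
  proof (rule mode_zero[where P="-B" and Q="-B" and Y="?Y"])
    fix s
    show "mderiv ?Y (- B ** ?Y s + ?Y s ** transpose (- B)) s"
      apply (rule mderiv_cong)
       apply (rule mderiv_add mderiv_transpose Omega_deriv[OF AB])+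
      by (simp add: malg Fm_tr[OF W] algebra_simps)
  next
    show "?Y 0 = 0" by (simp add: Omega_0 malg)
  qed
  then show ?thesis by (simp add: eq_neg_iff_add_eq_0 add.commute)
qed

definition Mlin :: "('n::finite \<Rightarrow> 'n \<Rightarrow> 'n \<Rightarrow> real) \<Rightarrow> real^'n \<Rightarrow> real^'n^'n" where
  "Mlin C x = (\<chi> i j. \<Sum>k\<in>UNIV. C i j k * x $ k)"

lemma Mlin_add: "Mlin C (x + y) = Mlin C x + Mlin C y"
  by (simp add: Mlin_def vec_eq_iff distrib_left sum.distrib)

lemma Mlin_deriv:
  fixes C :: "'n::finite \<Rightarrow> 'n \<Rightarrow> 'n \<Rightarrow> real"
  assumes D: "is_derivation C D"
  shows "Mlin C (D *v y) = D ** Mlin C y + Mlin C y ** transpose D"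
proof -
  have "(\<Sum>k\<in>UNIV. C i j k * (D *v y) $ k) =
        (\<Sum>l\<in>UNIV. D $ i $ l * (\<Sum>m\<in>UNIV. C l j m * y $ m)) + (\<Sum>l\<in>UNIV. (\<Sum>m\<in>UNIV. C i l m * y $ m) * D $ j $ l)"
    for i j
  proof -
    have "(\<Sum>k\<in>UNIV. C i j k * (D *v y) $ k) = (\<Sum>k\<in>UNIV. \<Sum>m\<in>UNIV. C i j k * D $ k $ m * y $ m)"
      by (simp add: matrix_vector_mult_def sum_distrib_left mult.assoc)
    also have "\<dots> = (\<Sum>m\<in>UNIV. \<Sum>k\<in>UNIV. C i j k * D $ k $ m * y $ m)"
      by (rule sum.swap)
    also have "\<dots> = (\<Sum>m\<in>UNIV. (\<Sum>k\<in>UNIV. C i j k * D $ k $ m) * y $ m)"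
      by (simp add: sum_distrib_right)
    also have "\<dots> = (\<Sum>m\<in>UNIV. ((\<Sum>l\<in>UNIV. D $ i $ l * C l j m) + (\<Sum>l\<in>UNIV. D $ j $ l * C i l m)) * y $ m)"
      using D by (simp add: is_derivation_def)
    also have "\<dots> = (\<Sum>m\<in>UNIV. \<Sum>l\<in>UNIV. D $ i $ l * C l j m * y $ m) + (\<Sum>m\<in>UNIV. \<Sum>l\<in>UNIV. D $ j $ l * C i l m * y $ m)"
      by (simp add: distrib_right sum.distrib sum_distrib_right)
    also have "\<dots> = (\<Sum>l\<in>UNIV. \<Sum>m\<in>UNIV. D $ i $ l * C l j m * y $ m) + (\<Sum>l\<in>UNIV. \<Sum>m\<in>UNIV. D $ j $ l * C i l m * y $ m)"
      by (intro arg_cong2[where f="(+)"] sum.swap)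
    also have "(\<Sum>l\<in>UNIV. \<Sum>m\<in>UNIV. D $ i $ l * C l j m * y $ m) = (\<Sum>l\<in>UNIV. D $ i $ l * (\<Sum>m\<in>UNIV. C l j m * y $ m))"
      by (simp only: sum_distrib_left mult.assoc)
    also have "(\<Sum>l\<in>UNIV. \<Sum>m\<in>UNIV. D $ j $ l * C i l m * y $ m) = (\<Sum>l\<in>UNIV. (\<Sum>m\<in>UNIV. C i l m * y $ m) * D $ j $ l)"
    proof (rule sum.cong[OF refl])
      fix l
      show "(\<Sum>m\<in>UNIV. D $ j $ l * C i l m * y $ m) = (\<Sum>m\<in>UNIV. C i l m * y $ m) * D $ j $ l"
        by (simp only: sum_distrib_right) (rule sum.cong[OF refl], simp only: mult.commute mult.left_commute)
    qed
    finally show ?thesis .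
  qed
  then show ?thesis
    by (simp add: Mlin_def vec_eq_iff matrix_matrix_mult_def transpose_def)
qed

lemma mderiv_Mlin:
  assumes "mderiv Y Y' t"
  shows "mderiv (\<lambda>s. Mlin C (Y s *v x)) (Mlin C (Y' *v x)) t"
  unfolding mderiv_def
proof (intro allI)
  fix i j
  have "((\<lambda>s. \<Sum>k\<in>UNIV. C i j k * (\<Sum>m\<in>UNIV. Y s $ k $ m * x $ m)) has_real_derivative
     (\<Sum>k\<in>UNIV. C i j k * (\<Sum>m\<in>UNIV. Y' $ k $ m * x $ m))) (at t)"
    using assms unfolding mderiv_def by (intro DERIV_sum DERIV_cmult DERIV_cmult_right) blast
  then show "((\<lambda>s. Mlin C (Y s *v x) $ i $ j) has_real_derivative Mlin C (Y' *v x) $ i $ j) (at t)"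
    by (simp add: Mlin_def matrix_vector_mult_def)
qed

lemma Mlin_mexp:
  fixes C :: "'n::finite \<Rightarrow> 'n \<Rightarrow> 'n \<Rightarrow> real"
  assumes D: "is_derivation C D"
  shows "Mlin C (mexp (s *\<^sub>R D) *v x) = mexp (s *\<^sub>R D) ** Mlin C x ** transpose (mexp (s *\<^sub>R D))"
proof -
  let ?Y = "\<lambda>s. Mlin C (mexp (s *\<^sub>R D) *v x) - mexp (s *\<^sub>R D) ** Mlin C x ** transpose (mexp (s *\<^sub>R D))"
  have "?Y s = 0"
  proof (rule mode_zero[where P=D and Q=D and Y="?Y"])
    fix s
    have e: "Mlin C ((D ** mexp (s *\<^sub>R D)) *v x) = D ** Mlin C (mexp (s *\<^sub>R D) *v x) + Mlin C (mexp (s *\<^sub>R D) *v x) ** transpose D"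
      by (simp add: Mlin_deriv[OF D] flip: matrix_vector_mul_assoc)
    show "mderiv ?Y (D ** ?Y s + ?Y s ** transpose D) s"
      apply (rule mderiv_cong)
       apply (rule mderiv_diff mderiv_Mlin mderiv_mult mderiv_const mderiv_mexp mderiv_transpose)+
      unfolding e by (simp add: malg algebra_simps)
  next
    show "?Y 0 = 0" by (simp add: mexp_0 malg)
  qed
  then show ?thesis by simp
qed

lemma conj_entry:
  fixes E X :: "real^'n^'n"
  shows "(E ** X ** transpose E) $ i $ j = (\<Sum>c\<in>UNIV. \<Sum>d\<in>UNIV. E $ i $ c * E $ j $ d * X $ c $ d)"
proof -
  have "(E ** X ** transpose E) $ i $ j = (\<Sum>d\<in>UNIV. \<Sum>c\<in>UNIV. E $ i $ c * X $ c $ d * E $ j $ d)"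
    by (simp add: matrix_matrix_mult_def transpose_def sum_distrib_right)
  also have "\<dots> = (\<Sum>c\<in>UNIV. \<Sum>d\<in>UNIV. E $ i $ c * X $ c $ d * E $ j $ d)"
    by (rule sum.swap)
  finally show ?thesis by (simp add: mult_ac)
qed

lemma fst_chain:
  assumes "(\<phi> has_real_derivative d) (at (fst h))"
  shows "((\<lambda>k::real \<times> 'b::real_normed_vector. \<phi> (fst k)) has_derivative (\<lambda>v. fst v * d)) (at h)"
proof -
  have "((\<lambda>k::real \<times> 'b. \<phi> (fst k)) has_derivative (\<lambda>v. d * fst v)) (at h)"
    using has_derivative_compose[OF has_derivative_fst[OF has_derivative_ident], of \<phi> "\<lambda>x. d * x" h UNIV]
      assms by (simp add: has_field_derivative_def)
  then show ?thesis by (simp add: mult.commute)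
qed

lemma snd_nth_deriv:
  "((\<lambda>k::real \<times> (real^'n). snd k $ j) has_derivative (\<lambda>v. snd v $ j)) (at h)"
  by (intro bounded_linear_imp_has_derivative bounded_linear_compose[OF bounded_linear_vec_nth bounded_linear_snd])

lemma mexp_neg_entry_deriv:
  "((\<lambda>s. mexp ((-s) *\<^sub>R B) $ i $ j) has_real_derivative (- (B ** mexp ((-t) *\<^sub>R B))) $ i $ j) (at t)"
  using mderiv_mexp_neg[of B t] by (simp add: mderiv_def)

lemma mexp_entry_deriv:
  "((\<lambda>s. mexp (s *\<^sub>R A) $ i $ j) has_real_derivative (A ** mexp (t *\<^sub>R A)) $ i $ j) (at t)"
  using mderiv_mexp[of A t] by (simp add: mderiv_def)

definition lD :: "real^'n^'n \<Rightarrow> real^'n^'n \<Rightarrow> real \<times> (real^'n) \<Rightarrow> real \<times> (real^'n) \<Rightarrow> 'n option \<Rightarrow> real \<times> (real^'n) \<Rightarrow> real" where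
  "lD A B g h a v = (case a of None \<Rightarrow> fst v | Some i \<Rightarrow>
     (\<Sum>j\<in>UNIV. mexp (fst g *\<^sub>R A) $ i $ j * snd v $ j)
   + (\<Sum>j\<in>UNIV. fst v * (- (B ** mexp ((- fst h) *\<^sub>R B))) $ i $ j * snd g $ j))"

definition rD :: "real^'n^'n \<Rightarrow> real^'n^'n \<Rightarrow> real \<times> (real^'n) \<Rightarrow> real \<times> (real^'n) \<Rightarrow> 'n option \<Rightarrow> real \<times> (real^'n) \<Rightarrow> real" where
  "rD A B g h a v = (case a of None \<Rightarrow> fst v | Some i \<Rightarrow>
     (\<Sum>j\<in>UNIV. fst v * (A ** mexp (fst g *\<^sub>R A)) $ i $ j * snd h $ j)
   + (\<Sum>j\<in>UNIV. mexp ((- fst h) *\<^sub>R B) $ i $ j * snd v $ j))"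

lemma hd_left: "((\<lambda>k. coord a (gmul A B g k)) has_derivative lD A B g h a) (at h)"
proof (cases a)
  case None
  have "(\<lambda>k. coord a (gmul A B g k)) = (\<lambda>k. fst g + fst k)"
    by (simp add: None gmul_def)
  moreover have "lD A B g h a = (\<lambda>v. 0 + fst v)" by (simp add: None lD_def fun_eq_iff)
  ultimately show ?thesis by (simp only:) (intro has_derivative_add has_derivative_const has_derivative_fst has_derivative_ident)
next
  case (Some i)
  have f: "(\<lambda>k. coord a (gmul A B g k)) = (\<lambda>k. (\<Sum>j\<in>UNIV. mexp (fst g *\<^sub>R A) $ i $ j * snd k $ j)
     + (\<Sum>j\<in>UNIV. mexp ((- fst k) *\<^sub>R B) $ i $ j * snd g $ j))"
    by (simp add: Some gmul_def matrix_vector_mult_def fun_eq_iff)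
  have l: "lD A B g h a = (\<lambda>v. (\<Sum>j\<in>UNIV. mexp (fst g *\<^sub>R A) $ i $ j * snd v $ j)
     + (\<Sum>j\<in>UNIV. fst v * (- (B ** mexp ((- fst h) *\<^sub>R B))) $ i $ j * snd g $ j))"
    by (simp add: Some lD_def fun_eq_iff)
  show ?thesis unfolding f l
    by (intro has_derivative_add has_derivative_sum has_derivative_mult_right has_derivative_mult_left
        snd_nth_deriv fst_chain mexp_neg_entry_deriv)
qed

lemma hd_right: "((\<lambda>k. coord a (gmul A B k h)) has_derivative rD A B g h a) (at g)"
proof (cases a)
  case None
  have "(\<lambda>k. coord a (gmul A B k h)) = (\<lambda>k. fst k + fst h)"
    by (simp add: None gmul_def)
  moreover have "rD A B g h a = (\<lambda>v. fst v + 0)" by (simp add: None rD_def fun_eq_iff)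
  ultimately show ?thesis by (simp only:) (intro has_derivative_add has_derivative_const has_derivative_fst has_derivative_ident)
next
  case (Some i)
  have f: "(\<lambda>k. coord a (gmul A B k h)) = (\<lambda>k. (\<Sum>j\<in>UNIV. mexp (fst k *\<^sub>R A) $ i $ j * snd h $ j)
     + (\<Sum>j\<in>UNIV. mexp ((- fst h) *\<^sub>R B) $ i $ j * snd k $ j))"
    by (simp add: Some gmul_def matrix_vector_mult_def fun_eq_iff)
  have l: "rD A B g h a = (\<lambda>v. (\<Sum>j\<in>UNIV. fst v * (A ** mexp (fst g *\<^sub>R A)) $ i $ j * snd h $ j)
     + (\<Sum>j\<in>UNIV. mexp ((- fst h) *\<^sub>R B) $ i $ j * snd v $ j))"
    by (simp add: Some rD_def fun_eq_iff)
  show ?thesis unfolding f l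
    by (intro has_derivative_add has_derivative_sum has_derivative_mult_right has_derivative_mult_left
        snd_nth_deriv fst_chain mexp_entry_deriv)
qed

definition lco :: "real^'n^'n \<Rightarrow> real^'n^'n \<Rightarrow> real \<times> (real^'n) \<Rightarrow> real \<times> (real^'n) \<Rightarrow> 'n option \<Rightarrow> 'n option \<Rightarrow> real" where
  "lco A B g h a c = (case a of None \<Rightarrow> (if c = None then 1 else 0) | Some i \<Rightarrow>
     (case c of None \<Rightarrow> - ((B ** mexp ((- fst h) *\<^sub>R B)) *v snd g) $ i | Some j \<Rightarrow> mexp (fst g *\<^sub>R A) $ i $ j))"

definition rco :: "real^'n^'n \<Rightarrow> real^'n^'n \<Rightarrow> real \<times> (real^'n) \<Rightarrow> real \<times> (real^'n) \<Rightarrow> 'n option \<Rightarrow> 'n option \<Rightarrow> real" where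
  "rco A B g h a c = (case a of None \<Rightarrow> (if c = None then 1 else 0) | Some i \<Rightarrow>
     (case c of None \<Rightarrow> ((A ** mexp (fst g *\<^sub>R A)) *v snd h) $ i | Some j \<Rightarrow> mexp ((- fst h) *\<^sub>R B) $ i $ j))"

lemma sum_axis: "(\<Sum>j\<in>UNIV. f j * axis k (1::real) $ j) = f k"
proof -
  have "(\<Sum>j\<in>UNIV. f j * axis k (1::real) $ j) = (\<Sum>j\<in>UNIV. if j = k then f j else 0)"
    by (rule sum.cong) (auto simp: axis_def)
  also have "\<dots> = f k" by simp
  finally show ?thesis .
qed

lemma pd_left: "pd c (\<lambda>k. coord a (gmul A B g k)) h = lco A B g h a c"
proof -
  have "pd c (\<lambda>k. coord a (gmul A B g k)) h = lD A B g h a (cdir c)"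
    unfolding pd_def frechet_derivative_at[OF hd_left, symmetric] ..
  also have "\<dots> = lco A B g h a c"
    by (cases a; cases c) (simp_all add: lD_def lco_def sum_axis matrix_vector_mult_def sum_negf)
  finally show ?thesis .
qed

lemma pd_right: "pd c (\<lambda>k. coord a (gmul A B k h)) g = rco A B g h a c"
proof -
  have "pd c (\<lambda>k. coord a (gmul A B k h)) g = rD A B g h a (cdir c)"
    unfolding pd_def frechet_derivative_at[OF hd_right, symmetric] ..
  also have "\<dots> = rco A B g h a c"
    by (cases a; cases c) (simp_all add: rD_def rco_def sum_axis matrix_vector_mult_def)
  finally show ?thesis .
qed

definition Tc :: "('n::finite \<Rightarrow> 'n \<Rightarrow> 'n \<Rightarrow> real) \<Rightarrow> real^'n^'n \<Rightarrow> 'n \<Rightarrow> 'n \<Rightarrow> 'n \<Rightarrow> real" where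
  "Tc C X i j l = (\<Sum>k\<in>UNIV. C i j k * X $ k $ l)"

definition Zc :: "('n::finite \<Rightarrow> 'n \<Rightarrow> 'n \<Rightarrow> real) \<Rightarrow> real^'n^'n \<Rightarrow> 'n \<Rightarrow> 'n \<Rightarrow> 'n \<Rightarrow> real" where
  "Zc C X i j l = Tc C X i j l + Tc C X j l i + Tc C X l i j"

lemma Tc_add: "Tc C (X + Y) i j l = Tc C X i j l + Tc C Y i j l"
  by (simp add: Tc_def distrib_left sum.distrib)

lemma Zc_add: "Zc C (X + Y) i j l = Zc C X i j l + Zc C Y i j l"
  by (simp add: Zc_def Tc_add)

lemma Tc_DX:
  assumes D: "is_derivation C D"
  shows "Tc C (D ** X) i j l = (\<Sum>q\<in>UNIV. D $ i $ q * Tc C X q j l) + (\<Sum>q\<in>UNIV. D $ j $ q * Tc C X i q l)"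
proof -
  define y where "y = (\<chi> k. X $ k $ l)"
  have 1: "Tc C Y a b c = Mlin C (\<chi> k. Y $ k $ c) $ a $ b" for Y a b c
    by (simp add: Tc_def Mlin_def)
  have 2: "(\<chi> k. (D ** X) $ k $ l) = D *v y"
    by (simp add: y_def vec_eq_iff matrix_matrix_mult_def matrix_vector_mult_def)
  have "Tc C (D ** X) i j l = (D ** Mlin C y + Mlin C y ** transpose D) $ i $ j"
    unfolding 1 2 Mlin_deriv[OF D] ..
  also have "\<dots> = (\<Sum>q\<in>UNIV. D $ i $ q * Tc C X q j l) + (\<Sum>q\<in>UNIV. Tc C X i q l * D $ j $ q)"
    by (simp add: matrix_matrix_mult_def transpose_def 1 y_def)
  also have "(\<Sum>q\<in>UNIV. Tc C X i q l * D $ j $ q) = (\<Sum>q\<in>UNIV. D $ j $ q * Tc C X i q l)"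
    by (rule sum.cong[OF refl]) (rule mult.commute)
  finally show ?thesis .
qed

lemma Tc_XDt: "Tc C (X ** transpose D) i j l = (\<Sum>q\<in>UNIV. D $ l $ q * Tc C X i j q)"
proof -
  have "Tc C (X ** transpose D) i j l = (\<Sum>k\<in>UNIV. \<Sum>q\<in>UNIV. C i j k * X $ k $ q * D $ l $ q)"
    by (simp add: Tc_def matrix_matrix_mult_def transpose_def sum_distrib_left mult.assoc)
  also have "\<dots> = (\<Sum>q\<in>UNIV. \<Sum>k\<in>UNIV. C i j k * X $ k $ q * D $ l $ q)"
    by (rule sum.swap)
  also have "\<dots> = (\<Sum>q\<in>UNIV. D $ l $ q * Tc C X i j q)"
  proof (rule sum.cong[OF refl])
    fix q
    show "(\<Sum>k\<in>UNIV. C i j k * X $ k $ q * D $ l $ q) = D $ l $ q * Tc C X i j q"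
      unfolding Tc_def sum_distrib_left by (rule sum.cong[OF refl]) (simp only: mult_ac)
  qed
  finally show ?thesis .
qed

lemma Zc_act:
  assumes D: "is_derivation C D"
  shows "Zc C (D ** X + X ** transpose D) i j l =
    (\<Sum>q\<in>UNIV. D $ i $ q * Zc C X q j l + D $ j $ q * Zc C X i q l + D $ l $ q * Zc C X i j q)"
  unfolding Zc_def Tc_add Tc_DX[OF D] Tc_XDt
  by (simp add: sum.distrib distrib_left add_ac)

lemma mderiv_Zc:
  assumes "mderiv Y Y' t"
  shows "((\<lambda>s. Zc C (Y s) i j l) has_real_derivative Zc C Y' i j l) (at t)"
  using assms unfolding Zc_def Tc_def mderiv_def
  by (intro DERIV_add DERIV_sum DERIV_cmult) blast+

lemma tode_zero:
  fixes f :: "real \<Rightarrow> 'n::finite \<Rightarrow> 'n \<Rightarrow> 'n \<Rightarrow> real" and D :: "real^'n^'n"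
  assumes d: "\<And>i j l t. ((\<lambda>s. f s i j l) has_real_derivative
      (\<Sum>q\<in>UNIV. D $ i $ q * f t q j l + D $ j $ q * f t i q l + D $ l $ q * f t i j q)) (at t)"
    and z: "\<And>i j l. f 0 i j l = 0"
  shows "f t i j l = 0"
proof -
  define g where "g x s = f s (fst x) (fst (snd x)) (snd (snd x))" for x :: "'n \<times> 'n \<times> 'n" and s
  define K where "K x y = (if fst (snd y) = fst (snd x) then (if snd (snd y) = snd (snd x) then D $ fst x $ fst y else 0) else 0)
     + (if fst y = fst x then (if snd (snd y) = snd (snd x) then D $ fst (snd x) $ fst (snd y) else 0) else 0)
     + (if fst y = fst x then (if fst (snd y) = fst (snd x) then D $ snd (snd x) $ snd (snd y) else 0) else 0)"
    for x y :: "'n \<times> 'n \<times> 'n"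
  have "g x t = 0" for x
  proof (rule ode_zero[where K=K and f=g])
    fix x :: "'n \<times> 'n \<times> 'n" and s
    obtain i j l where x: "x = (i, j, l)" by (cases x) auto
    have p1: "(\<Sum>p\<in>UNIV. \<Sum>q\<in>UNIV. \<Sum>r\<in>UNIV. (if q = j then (if r = l then D $ i $ p else 0) else 0) * f s p q r)
        = (\<Sum>p\<in>UNIV. D $ i $ p * f s p j l)"
      by (simp add: ifz_mult sum_if_const)
    have p2: "(\<Sum>p\<in>UNIV. \<Sum>q\<in>UNIV. \<Sum>r\<in>UNIV. (if p = i then (if r = l then D $ j $ q else 0) else 0) * f s p q r)
        = (\<Sum>q\<in>UNIV. D $ j $ q * f s i q l)"
      by (simp add: ifz_mult sum_if_const)
    have p3: "(\<Sum>p\<in>UNIV. \<Sum>q\<in>UNIV. \<Sum>r\<in>UNIV. (if p = i then (if q = j then D $ l $ r else 0) else 0) * f s p q r)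
        = (\<Sum>r\<in>UNIV. D $ l $ r * f s i j r)"
      by (simp add: ifz_mult sum_if_const)
    have "(\<Sum>y\<in>UNIV. K x y * g y s) = (\<Sum>p\<in>UNIV. \<Sum>q\<in>UNIV. \<Sum>r\<in>UNIV.
         (if q = j then (if r = l then D $ i $ p else 0) else 0) * f s p q r
       + (if p = i then (if r = l then D $ j $ q else 0) else 0) * f s p q r
       + (if p = i then (if q = j then D $ l $ r else 0) else 0) * f s p q r)"
      by (simp only: sum_pair_UNIV K_def g_def x fst_conv snd_conv distrib_right)
    also have "\<dots> = (\<Sum>q\<in>UNIV. D $ i $ q * f s q j l + D $ j $ q * f s i q l + D $ l $ q * f s i j q)"
      by (simp only: sum.distrib p1 p2 p3)
    finally have e: "(\<Sum>y\<in>UNIV. K x y * g y s) = (\<Sum>q\<in>UNIV. D $ i $ q * f s q j l + D $ j $ q * f s i q l + D $ l $ q * f s i j q)" .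
    have gx: "g x = (\<lambda>s. f s i j l)" by (simp add: fun_eq_iff g_def x)
    show "(g x has_real_derivative (\<Sum>y\<in>UNIV. K x y * g y s)) (at s)"
      unfolding e gx by (rule d)
  next
    show "\<And>x. g x 0 = 0" by (simp add: g_def z)
  qed
  then show ?thesis using g_def by (metis fst_conv snd_conv)
qed

lemma derivation_neg: "is_derivation C D \<Longrightarrow> is_derivation C (- D)"
  by (simp add: is_derivation_def sum_negf)

lemma Zc_W:
  assumes "lie_2cocycle C W" shows "Zc C W i j l = 0"
proof -
  have "(\<Sum>k\<in>UNIV. C i j k * W $ k $ l + C j l k * W $ k $ i + C l i k * W $ k $ j) = 0"
    using assms unfolding lie_2cocycle_def by blast
  then show ?thesis by (simp add: Zc_def Tc_def sum.distrib)
qed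

lemma Zc_Fm:
  assumes A: "is_derivation C A" and W: "lie_2cocycle C W"
  shows "Zc C (Fm A W t) i j l = 0"
proof (rule tode_zero[where f="\<lambda>t i j l. Zc C (Fm A W t) i j l" and D=A])
  fix i j l t
  show "((\<lambda>s. Zc C (Fm A W s) i j l) has_real_derivative
      (\<Sum>q\<in>UNIV. A $ i $ q * Zc C (Fm A W t) q j l + A $ j $ q * Zc C (Fm A W t) i q l + A $ l $ q * Zc C (Fm A W t) i j q)) (at t)"
    using mderiv_Zc[OF mderiv_Fm[of A W t], of C i j l] unfolding Zc_act[OF A] .
next
  fix i j l show "Zc C (Fm A W 0) i j l = 0" by (simp add: Fm_0 Zc_W[OF W])
qed

lemma Zc_Omega:
  assumes AB: "A ** B = B ** A" and A: "is_derivation C A" and B: "is_derivation C B"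
    and W: "lie_2cocycle C W"
  shows "Zc C (Omega A B W t) i j l = 0"
proof (rule tode_zero[where f="\<lambda>t i j l. Zc C (Omega A B W t) i j l" and D="-B"])
  fix i j l t
  have e: "- (B ** Omega A B W t) - Omega A B W t ** transpose B + Fm A W t
     = ((-B) ** Omega A B W t + Omega A B W t ** transpose (-B)) + Fm A W t"
    by (simp add: malg)
  show "((\<lambda>s. Zc C (Omega A B W s) i j l) has_real_derivative
      (\<Sum>q\<in>UNIV. (-B) $ i $ q * Zc C (Omega A B W t) q j l + (-B) $ j $ q * Zc C (Omega A B W t) i q l
          + (-B) $ l $ q * Zc C (Omega A B W t) i j q)) (at t)"
    using mderiv_Zc[OF Omega_deriv[OF AB, of W t], of C i j l]
    unfolding e Zc_add[of C "(-B) ** Omega A B W t + Omega A B W t ** transpose (-B)" "Fm A W t"]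
      Zc_act[OF derivation_neg[OF B]] Zc_Fm[OF A W] by simp
next
  fix i j l show "Zc C (Omega A B W 0) i j l = 0" by (simp add: Omega_0 Zc_def Tc_def)
qed

definition Xst :: "real^'n^'n \<Rightarrow> real^'n^'n \<Rightarrow> real^'n^'n \<Rightarrow> real \<Rightarrow> (real^'n^'n) \<times> (real^'n^'n)" where
  "Xst A B W t = (Omega A B W t, Fm A W t)"

definition Mst :: "real^'n^'n \<Rightarrow> real^'n^'n \<Rightarrow> (real^'n^'n) \<times> (real^'n^'n) \<Rightarrow> (real^'n^'n) \<times> (real^'n^'n)" where
  "Mst A B z = (- (B ** fst z) - fst z ** transpose B + snd z, A ** snd z + snd z ** transpose A)"

lemma Xst_deriv:
  assumes AB: "A ** B = B ** A"
  shows "(Xst A B W has_vector_derivative Mst A B (Xst A B W t)) (at t)"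
  unfolding Xst_def Mst_def fst_conv snd_conv
  by (intro has_vector_derivative_Pair mderiv_vec Omega_deriv[OF AB] mderiv_Fm)

lemma linear_Mst: "linear (Mst A B)"
  by (rule linearI) (simp_all add: Mst_def malg matrix_scalar_ac transpose_scalar
      scalar_matrix_assoc[symmetric] algebra_simps)

definition qf :: "real^'n^'n \<Rightarrow> real^'n^'n \<Rightarrow> real^'n^'n \<Rightarrow> ((real^'n^'n) \<times> (real^'n^'n) \<Rightarrow> real)
   \<Rightarrow> ('n \<Rightarrow> real) \<Rightarrow> real \<Rightarrow> real \<times> (real^'n) \<Rightarrow> real" where
  "qf A B W l c d = (\<lambda>p. l (Xst A B W (fst p)) + (\<Sum>k\<in>UNIV. c k * snd p $ k) + d)"

lemma qf_deriv:
  assumes AB: "A ** B = B ** A" and l: "linear l"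
  shows "(qf A B W l c d has_derivative
     (\<lambda>v. fst v * l (Mst A B (Xst A B W (fst p))) + (\<Sum>k\<in>UNIV. c k * snd v $ k))) (at p)"
proof -
  have bl: "bounded_linear l" using l by (simp add: linear_conv_bounded_linear)
  have "((\<lambda>q. Xst A B W (fst q)) has_derivative (\<lambda>v. fst v *\<^sub>R Mst A B (Xst A B W (fst p)))) (at p)"
    using has_derivative_compose[OF has_derivative_fst[OF has_derivative_ident], of "Xst A B W"
        "\<lambda>h. h *\<^sub>R Mst A B (Xst A B W (fst p))" p UNIV]
      Xst_deriv[OF AB, of W "fst p"] by (simp add: has_vector_derivative_def)
  then have "((\<lambda>q. l (Xst A B W (fst q))) has_derivative (\<lambda>v. l (fst v *\<^sub>R Mst A B (Xst A B W (fst p))))) (at p)"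
    by (rule bounded_linear.has_derivative[OF bl])
  then have 1: "((\<lambda>q. l (Xst A B W (fst q))) has_derivative (\<lambda>v. fst v * l (Mst A B (Xst A B W (fst p))))) (at p)"
    by (simp add: linear_scale[OF l])
  have 2: "((\<lambda>q. \<Sum>k\<in>UNIV. c k * snd q $ k) has_derivative (\<lambda>v. \<Sum>k\<in>UNIV. c k * snd v $ k)) (at p)"
    by (intro has_derivative_sum has_derivative_mult_right has_derivative_mult_left snd_nth_deriv)
  have "(qf A B W l c d has_derivative
     (\<lambda>v. fst v * l (Mst A B (Xst A B W (fst p))) + (\<Sum>k\<in>UNIV. c k * snd v $ k) + 0)) (at p)"
    unfolding qf_def by (intro has_derivative_add 1 2 has_derivative_const)
  then show ?thesis by simp
qed

lemma qf_Ck: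
  fixes A B W :: "real^'n^'n"
  assumes AB: "A ** B = B ** A"
  shows "linear l \<Longrightarrow> Ck k (qf A B W l c d)"
proof (induction k arbitrary: l c d)
  case 0
  have "continuous_on UNIV (qf A B W l c d)"
    by (rule continuous_at_imp_continuous_on, intro ballI, rule has_derivative_continuous, rule qf_deriv[OF AB 0])
  then show ?case by simp
next
  case (Suc k)
  have diff: "qf A B W l c d differentiable (at x)" for x
    by (rule differentiableI[OF qf_deriv[OF AB Suc.prems]])
  have cont: "continuous_on UNIV (qf A B W l c d)"
    by (rule continuous_at_imp_continuous_on, intro ballI, rule has_derivative_continuous, rule qf_deriv[OF AB Suc.prems])
  have "Ck k (\<lambda>x. frechet_derivative (qf A B W l c d) (at x) b)" for b :: "real \<times> (real^'n)"
  proof -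
    have e: "(\<lambda>x. frechet_derivative (qf A B W l c d) (at x) b)
       = qf A B W (\<lambda>z. fst b * l (Mst A B z)) (\<lambda>k. 0) (\<Sum>k\<in>UNIV. c k * snd b $ k)"
      by (rule ext, subst frechet_derivative_at[OF qf_deriv[OF AB Suc.prems], symmetric]) (simp add: qf_def)
    have lin: "linear (\<lambda>z. fst b * l (Mst A B z))"
    proof -
      have lm: "linear (\<lambda>z. l (Mst A B z))"
        using linear_compose[OF linear_Mst Suc.prems] by (simp add: o_def)
      show ?thesis
        by (rule linearI) (simp_all add: linear_add[OF lm] linear_scale[OF lm] algebra_simps)
    qed
    show ?thesis unfolding e by (rule Suc.IH[OF lin])
  qed
  then show ?case using diff cont by simp
qed

lemma claimed_qf:
  "(\<lambda>p. claimed_bracket A B C W p a b) =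
    (case (a, b) of (Some i, Some j) \<Rightarrow> qf A B W (\<lambda>z. fst z $ i $ j) (C i j) 0
      | _ \<Rightarrow> qf A B W (\<lambda>z. 0) (\<lambda>k. 0) 0)"
  by (cases a; cases b) (auto simp: qf_def Xst_def fun_eq_iff)

lemma linear_entry: "linear (\<lambda>z::(real^'n^'n) \<times> (real^'n^'n). fst z $ i $ j)"
  by (rule linearI) simp_all

lemma claimed_smooth:
  assumes AB: "A ** B = B ** A"
  shows "smooth_fun (\<lambda>p. claimed_bracket A B C W p a b)"
  unfolding smooth_fun_def claimed_qf
  by (cases a; cases b) (auto intro!: qf_Ck[OF AB] linear_entry linearI)

definition Pm :: "real^'n^'n \<Rightarrow> real^'n^'n \<Rightarrow> ('n::finite \<Rightarrow> 'n \<Rightarrow> 'n \<Rightarrow> real) \<Rightarrow> real^'n^'n \<Rightarrow> real \<times> (real^'n) \<Rightarrow> real^'n^'n" where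
  "Pm A B C W p = Omega A B W (fst p) + Mlin C (snd p)"

lemma Pm_mult:
  fixes A B W :: "real^'n^'n"
  assumes AB: "A ** B = B ** A" and A: "is_derivation C A" and B: "is_derivation C B"
  shows "Pm A B C W (gmul A B g h) = mexp (fst g *\<^sub>R A) ** Pm A B C W h ** transpose (mexp (fst g *\<^sub>R A))
     + mexp ((- fst h) *\<^sub>R B) ** Pm A B C W g ** transpose (mexp ((- fst h) *\<^sub>R B))"
  unfolding Pm_def gmul_def fst_conv snd_conv Omega_add[OF AB] Mlin_add Mlin_mexp[OF A] Mlin_mexp[OF B]
  by (simp add: malg algebra_simps)

lemma sum_opt: "(\<Sum>c\<in>(UNIV::'a::finite option set). f c) = f None + (\<Sum>i\<in>UNIV. f (Some i))"
proof -
  have u: "(UNIV::'a option set) = insert None (range Some)" by (rule UNIV_option_conv)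
  have "sum f (insert None (range Some)) = f None + sum f (range Some)"
    by (rule sum.insert) auto
  then have "(\<Sum>c\<in>(UNIV::'a option set). f c) = f None + sum f (range Some)"
    by (simp only: u[symmetric])
  also have "sum f (range Some) = (\<Sum>i\<in>UNIV. f (Some i))"
    by (simp add: sum.reindex)
  finally show ?thesis .
qed

lemma claimed_mult:
  fixes A B W :: "real^'n^'n"
  assumes AB: "A ** B = B ** A" and A: "is_derivation C A" and B: "is_derivation C B"
  shows "multiplicative A B (claimed_bracket A B C W)"
  unfolding multiplicative_def pd_left pd_right
proof (intro allI)
  fix g h :: "real \<times> (real^'n)" and a b :: "'n option"
  show "claimed_bracket A B C W (gmul A B g h) a b =
        (\<Sum>c\<in>UNIV. \<Sum>d\<in>UNIV. lco A B g h a c * lco A B g h b d * claimed_bracket A B C W h c d) +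
        (\<Sum>c\<in>UNIV. \<Sum>d\<in>UNIV. rco A B g h a c * rco A B g h b d * claimed_bracket A B C W g c d)"
  proof (cases a)
    case None
    then show ?thesis by (simp add: sum_opt lco_def rco_def)
  next
    case (Some i)
    show ?thesis
    proof (cases b)
      case None
      then show ?thesis by (simp add: sum_opt lco_def rco_def)
    next
      case (Some j)
      have "claimed_bracket A B C W (gmul A B g h) a b = Pm A B C W (gmul A B g h) $ i $ j"
        using \<open>a = Some i\<close> Some by (simp add: Pm_def Mlin_def)
      also have "\<dots> = (mexp (fst g *\<^sub>R A) ** Pm A B C W h ** transpose (mexp (fst g *\<^sub>R A))) $ i $ j
          + (mexp ((- fst h) *\<^sub>R B) ** Pm A B C W g ** transpose (mexp ((- fst h) *\<^sub>R B))) $ i $ j"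
        unfolding Pm_mult[OF AB A B] by simp
      also have "\<dots> = (\<Sum>c\<in>UNIV. \<Sum>d\<in>UNIV. lco A B g h a c * lco A B g h b d * claimed_bracket A B C W h c d) +
        (\<Sum>c\<in>UNIV. \<Sum>d\<in>UNIV. rco A B g h a c * rco A B g h b d * claimed_bracket A B C W g c d)"
        unfolding conj_entry using \<open>a = Some i\<close> Some
        by (simp add: sum_opt lco_def rco_def Pm_def Mlin_def)
      finally show ?thesis .
    qed
  qed
qed

definition Od :: "real^'n^'n \<Rightarrow> real^'n^'n \<Rightarrow> real^'n^'n \<Rightarrow> real \<Rightarrow> real^'n^'n" where
  "Od A B W t = - (B ** Omega A B W t) - Omega A B W t ** transpose B + Fm A W t"

lemma pd_claimed:
  fixes A B W :: "real^'n^'n"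
  assumes AB: "A ** B = B ** A"
  shows "pd c (\<lambda>q. claimed_bracket A B C W q a b) p =
    (case a of None \<Rightarrow> 0 | Some i \<Rightarrow> (case b of None \<Rightarrow> 0 | Some j \<Rightarrow>
       (case c of None \<Rightarrow> Od A B W (fst p) $ i $ j | Some k \<Rightarrow> C i j k)))"
proof (cases "\<exists>i j. a = Some i \<and> b = Some j")
  case True
  then obtain i j where ij: "a = Some i" "b = Some j" by blast
  have e: "(\<lambda>q. claimed_bracket A B C W q a b) = qf A B W (\<lambda>z. fst z $ i $ j) (C i j) 0"
    unfolding claimed_qf by (simp add: ij)
  have "pd c (\<lambda>q. claimed_bracket A B C W q a b) p =
      fst (cdir c) * (fst (Mst A B (Xst A B W (fst p)))) $ i $ j + (\<Sum>k\<in>UNIV. C i j k * snd (cdir c) $ k)"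
    unfolding pd_def e frechet_derivative_at[OF qf_deriv[OF AB linear_entry], symmetric] by simp
  then show ?thesis
    by (cases c) (simp_all add: ij Mst_def Xst_def Od_def sum_axis)
next
  case False
  then have e: "(\<lambda>q. claimed_bracket A B C W q a b) = (\<lambda>q. 0)"
    by (cases a; cases b) (auto simp: fun_eq_iff)
  have "pd c (\<lambda>q. claimed_bracket A B C W q a b) p = 0"
    unfolding pd_def e frechet_derivative_at[OF has_derivative_const, symmetric] ..
  then show ?thesis using False by (cases a; cases b) auto
qed

lemma claimed_cocycle:
  fixes A B W :: "real^'n^'n"
  assumes AB: "A ** B = B ** A"
  shows "has_cocycle C W (claimed_bracket A B C W)"
  unfolding has_cocycle_def pd_claimed[OF AB]
  by (intro allI, case_tac a; case_tac b; case_tac c)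
     (simp_all add: gunit_def Od_def Omega_0 Fm_0 malg)

lemma jac_core:
  fixes C :: "'n::finite \<Rightarrow> 'n \<Rightarrow> 'n \<Rightarrow> real" and X :: "real^'n^'n"
  assumes J: "lie_structure_constants C" and Z: "Zc C X j l i = 0"
  shows "(\<Sum>m\<in>UNIV. (X $ m $ i + (\<Sum>k\<in>UNIV. C m i k * x $ k)) * C j l m
     + (X $ m $ j + (\<Sum>k\<in>UNIV. C m j k * x $ k)) * C l i m
     + (X $ m $ l + (\<Sum>k\<in>UNIV. C m l k * x $ k)) * C i j m) = 0"
proof -
  have 1: "(X $ m $ i + (\<Sum>k\<in>UNIV. C m i k * x $ k)) * C j l m
     + (X $ m $ j + (\<Sum>k\<in>UNIV. C m j k * x $ k)) * C l i m
     + (X $ m $ l + (\<Sum>k\<in>UNIV. C m l k * x $ k)) * C i j m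
     = (X $ m $ i * C j l m + X $ m $ j * C l i m + X $ m $ l * C i j m)
     + (\<Sum>k\<in>UNIV. x $ k * (C j l m * C m i k + C l i m * C m j k + C i j m * C m l k))" for m
  proof -
    have "(\<Sum>k\<in>UNIV. x $ k * (C j l m * C m i k + C l i m * C m j k + C i j m * C m l k))
      = (\<Sum>k\<in>UNIV. C j l m * (C m i k * x $ k) + C l i m * (C m j k * x $ k) + C i j m * (C m l k * x $ k))"
      by (rule sum.cong) (simp_all add: algebra_simps)
    also have "\<dots> = C j l m * (\<Sum>k\<in>UNIV. C m i k * x $ k) + C l i m * (\<Sum>k\<in>UNIV. C m j k * x $ k)
        + C i j m * (\<Sum>k\<in>UNIV. C m l k * x $ k)"
      by (simp only: sum.distrib sum_distrib_left)
    finally show ?thesis by (simp add: algebra_simps)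
  qed
  have 2: "(\<Sum>m\<in>UNIV. X $ m $ i * C j l m + X $ m $ j * C l i m + X $ m $ l * C i j m) = Zc C X j l i"
    by (simp add: Zc_def Tc_def sum.distrib mult.commute)
  have 3: "(\<Sum>m\<in>UNIV. \<Sum>k\<in>UNIV. x $ k * (C j l m * C m i k + C l i m * C m j k + C i j m * C m l k)) = 0"
  proof -
    have "(\<Sum>m\<in>UNIV. \<Sum>k\<in>UNIV. x $ k * (C j l m * C m i k + C l i m * C m j k + C i j m * C m l k))
      = (\<Sum>k\<in>UNIV. \<Sum>m\<in>UNIV. x $ k * (C j l m * C m i k + C l i m * C m j k + C i j m * C m l k))"
      by (rule sum.swap)
    also have "\<dots> = (\<Sum>k\<in>UNIV. x $ k * (\<Sum>m\<in>UNIV. C j l m * C m i k + C l i m * C m j k + C i j m * C m l k))"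
      by (simp only: sum_distrib_left)
    also have "\<dots> = 0"
    proof -
      have jac: "\<forall>i j l m. (\<Sum>k\<in>UNIV. C i j k * C k l m + C j l k * C k i m + C l i k * C k j m) = 0"
        using J unfolding lie_structure_constants_def by blast
      show ?thesis
        by (rule sum.neutral, intro ballI) (simp only: jac[rule_format] mult_zero_right)
    qed
    finally show ?thesis .
  qed
  have "(\<Sum>m\<in>UNIV. (X $ m $ i + (\<Sum>k\<in>UNIV. C m i k * x $ k)) * C j l m
     + (X $ m $ j + (\<Sum>k\<in>UNIV. C m j k * x $ k)) * C l i m
     + (X $ m $ l + (\<Sum>k\<in>UNIV. C m l k * x $ k)) * C i j m)
     = (\<Sum>m\<in>UNIV. X $ m $ i * C j l m + X $ m $ j * C l i m + X $ m $ l * C i j m)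
     + (\<Sum>m\<in>UNIV. \<Sum>k\<in>UNIV. x $ k * (C j l m * C m i k + C l i m * C m j k + C i j m * C m l k))"
    unfolding 1 by (rule sum.distrib)
  also have "\<dots> = Zc C X j l i + 0" by (simp only: 2 3)
  also have "\<dots> = 0" by (simp add: Z)
  finally show ?thesis .
qed

lemma W_tr:
  assumes "lie_2cocycle C W" shows "transpose W = - W"
proof -
  have h: "\<forall>i j. W $ i $ j = - W $ j $ i" using assms unfolding lie_2cocycle_def by blast
  have "transpose W $ i $ j = (- W) $ i $ j" for i j
    using h[rule_format, of j i] by (simp add: transpose_def)
  then show ?thesis by (simp add: vec_eq_iff)
qed

lemma claimed_poisson:
  fixes A B W :: "real^'n^'n" and C :: "'n \<Rightarrow> 'n \<Rightarrow> 'n \<Rightarrow> real"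
  assumes J: "lie_structure_constants C" and W: "lie_2cocycle C W"
    and AB: "A ** B = B ** A" and A: "is_derivation C A" and B: "is_derivation C B"
  shows "poisson_bivector (claimed_bracket A B C W)"
  unfolding poisson_bivector_def
proof (intro conjI allI)
  fix a b show "smooth_fun (\<lambda>p. claimed_bracket A B C W p a b)" by (rule claimed_smooth[OF AB])
next
  fix p a b
  show "claimed_bracket A B C W p a b = - claimed_bracket A B C W p b a"
  proof (cases a; cases b)
    fix i j assume ij: "a = Some i" "b = Some j"
    have o: "Omega A B W (fst p) $ j $ i = - Omega A B W (fst p) $ i $ j"
      using arg_cong[OF Omega_antisym[OF AB W_tr[OF W], of "fst p"], of "\<lambda>M. M $ i $ j"]
      by (simp add: transpose_def)
    have c: "C j i k = - C i j k" for k
    proof -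
      have "\<forall>i j k. C i j k = - C j i k" using J unfolding lie_structure_constants_def by blast
      then show ?thesis by blast
    qed
    show ?thesis using ij by (simp add: o c sum_negf)
  qed simp_all
next
  fix p a b c
  show "(\<Sum>l\<in>UNIV. claimed_bracket A B C W p l a * pd l (\<lambda>q. claimed_bracket A B C W q b c) p
        + claimed_bracket A B C W p l b * pd l (\<lambda>q. claimed_bracket A B C W q c a) p
        + claimed_bracket A B C W p l c * pd l (\<lambda>q. claimed_bracket A B C W q a b) p) = 0"
  proof (cases "\<exists>i j k. a = Some i \<and> b = Some j \<and> c = Some k")
    case True
    then obtain i j k where ijk: "a = Some i" "b = Some j" "c = Some k" by blast
    have "(\<Sum>l\<in>UNIV. claimed_bracket A B C W p l a * pd l (\<lambda>q. claimed_bracket A B C W q b c) p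
        + claimed_bracket A B C W p l b * pd l (\<lambda>q. claimed_bracket A B C W q c a) p
        + claimed_bracket A B C W p l c * pd l (\<lambda>q. claimed_bracket A B C W q a b) p) =
       (\<Sum>m\<in>UNIV. (Omega A B W (fst p) $ m $ i + (\<Sum>k'\<in>UNIV. C m i k' * snd p $ k')) * C j k m
     + (Omega A B W (fst p) $ m $ j + (\<Sum>k'\<in>UNIV. C m j k' * snd p $ k')) * C k i m
     + (Omega A B W (fst p) $ m $ k + (\<Sum>k'\<in>UNIV. C m k k' * snd p $ k')) * C i j m)"
      unfolding pd_claimed[OF AB] by (simp add: ijk sum_opt)
    also have "\<dots> = 0"
      by (rule jac_core[OF J Zc_Omega[OF AB A B W]])
    finally show ?thesis .
  next
    case False
    then show ?thesis
      unfolding pd_claimed[OF AB] by (cases a; cases b; cases c) (simp_all add: sum_opt)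
  qed
qed

lemma claimed_PL:
  fixes A B W :: "real^'n^'n" and C :: "'n \<Rightarrow> 'n \<Rightarrow> 'n \<Rightarrow> real"
  assumes J: "lie_structure_constants C" and W: "lie_2cocycle C W"
    and A: "is_derivation C A" and B: "is_derivation C B" and AB: "A ** B = B ** A"
  shows "poisson_lie_with_cocycle A B C W (claimed_bracket A B C W)"
  unfolding poisson_lie_with_cocycle_def
  using claimed_poisson[OF J W AB A B] claimed_mult[OF AB A B] claimed_cocycle[OF AB] by blast

lemma curve_zero:
  fixes u w :: "real \<Rightarrow> 'a::finite \<Rightarrow> 'a \<Rightarrow> real"
    and l :: "real \<Rightarrow> 'a \<Rightarrow> 'a \<Rightarrow> 'a \<Rightarrow> 'a \<Rightarrow> real" and r :: "real \<Rightarrow> 'a \<Rightarrow> 'a \<Rightarrow> 'a \<Rightarrow> 'a \<Rightarrow> real"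
  assumes eq: "\<And>s \<sigma> a b. u (s + \<sigma>) a b = (\<Sum>c\<in>UNIV. \<Sum>d\<in>UNIV. l s a b c d * w \<sigma> c d)
       + (\<Sum>c\<in>UNIV. \<Sum>d\<in>UNIV. r \<sigma> a b c d * u s c d)"
    and w: "\<And>c d. ((\<lambda>\<sigma>. w \<sigma> c d) has_real_derivative 0) (at 0)"
    and rd: "\<And>a b c d. \<exists>e. ((\<lambda>\<sigma>. r \<sigma> a b c d) has_real_derivative e) (at 0)"
    and u0: "\<And>a b. u 0 a b = 0"
  shows "u s a b = 0"
proof -
  define r' where "r' a b c d = (SOME e. ((\<lambda>\<sigma>. r \<sigma> a b c d) has_real_derivative e) (at 0))" for a b c d
  have r': "((\<lambda>\<sigma>. r \<sigma> a b c d) has_real_derivative r' a b c d) (at 0)" for a b c d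
    unfolding r'_def by (rule someI_ex[OF rd])
  have du: "((\<lambda>t. u t a b) has_real_derivative (\<Sum>c\<in>UNIV. \<Sum>d\<in>UNIV. r' a b c d * u s c d)) (at s)" for s a b
  proof -
    have "((\<lambda>\<sigma>. (\<Sum>c\<in>UNIV. \<Sum>d\<in>UNIV. l s a b c d * w \<sigma> c d)
       + (\<Sum>c\<in>UNIV. \<Sum>d\<in>UNIV. r \<sigma> a b c d * u s c d)) has_real_derivative
       (\<Sum>c\<in>UNIV. \<Sum>d\<in>UNIV. l s a b c d * 0) + (\<Sum>c\<in>UNIV. \<Sum>d\<in>UNIV. r' a b c d * u s c d)) (at 0)"
      by (intro DERIV_add DERIV_sum DERIV_cmult DERIV_cmult_right w r')
    moreover have "(\<lambda>\<sigma>. u (\<sigma> + s) a b) = (\<lambda>\<sigma>. (\<Sum>c\<in>UNIV. \<Sum>d\<in>UNIV. l s a b c d * w \<sigma> c d)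
       + (\<Sum>c\<in>UNIV. \<Sum>d\<in>UNIV. r \<sigma> a b c d * u s c d))"
    proof (rule ext)
      fix \<sigma> show "u (\<sigma> + s) a b = (\<Sum>c\<in>UNIV. \<Sum>d\<in>UNIV. l s a b c d * w \<sigma> c d)
       + (\<Sum>c\<in>UNIV. \<Sum>d\<in>UNIV. r \<sigma> a b c d * u s c d)"
        using eq[of s \<sigma> a b] by (simp add: add.commute)
    qed
    ultimately have "((\<lambda>\<sigma>. u (\<sigma> + s) a b) has_real_derivative (\<Sum>c\<in>UNIV. \<Sum>d\<in>UNIV. r' a b c d * u s c d)) (at 0)"
      by simp
    then show ?thesis using DERIV_shift[of "\<lambda>t. u t a b" _ 0 s] by simp
  qed
  define f where "f x t = u t (fst x) (snd x)" for x :: "'a \<times> 'a" and t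
  define K where "K x y = r' (fst x) (snd x) (fst y) (snd y)" for x y :: "'a \<times> 'a"
  have "f x s = 0" for x
  proof (rule ode_zero[where f=f and K=K])
    fix x :: "'a \<times> 'a" and t
    have "(\<Sum>y\<in>UNIV. K x y * f y t) = (\<Sum>c\<in>UNIV. \<Sum>d\<in>UNIV. r' (fst x) (snd x) c d * u t c d)"
      by (simp add: sum_pair_UNIV K_def f_def)
    moreover have "f x = (\<lambda>t. u t (fst x) (snd x))" by (simp add: fun_eq_iff f_def)
    ultimately show "(f x has_real_derivative (\<Sum>y\<in>UNIV. K x y * f y t)) (at t)"
      using du by simp
  next
    show "\<And>x. f x 0 = 0" by (simp add: f_def u0)
  qed
  then show ?thesis using f_def by (metis fst_conv snd_conv)
qed

lemma vec_decomp: "(\<Sum>i\<in>UNIV. x $ i *\<^sub>R axis i (1::real)) = x"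
proof -
  have "(\<Sum>i\<in>UNIV. x $ i *\<^sub>R axis i (1::real)) $ j = x $ j" for j
  proof -
    have "(\<Sum>i\<in>UNIV. x $ i *\<^sub>R axis i (1::real)) $ j = (\<Sum>i\<in>UNIV. (x $ i *\<^sub>R axis i (1::real)) $ j)"
      by (simp only: sum_component)
    also have "\<dots> = (\<Sum>i\<in>UNIV. if i = j then x $ i else 0)"
      by (rule sum.cong) (auto simp: axis_def)
    also have "\<dots> = x $ j" by simp
    finally show ?thesis .
  qed
  then show ?thesis by (simp add: vec_eq_iff)
qed

lemma pair_decomp:
  "v = fst v *\<^sub>R cdir None + (\<Sum>i\<in>UNIV. snd v $ i *\<^sub>R cdir (Some i))"
proof -
  have "(\<Sum>i\<in>UNIV. snd v $ i *\<^sub>R cdir (Some i)) = (0, \<Sum>i\<in>UNIV. snd v $ i *\<^sub>R axis i (1::real))"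
    by (simp add: prod_eq_iff fst_sum snd_sum)
  then show ?thesis by (simp add: vec_decomp prod_eq_iff)
qed

lemma zero_deriv_from_pd:
  fixes f :: "real \<times> (real^'n) \<Rightarrow> real"
  assumes df: "f differentiable (at p)" and z: "\<And>c. pd c f p = 0"
  shows "(f has_derivative (\<lambda>v. 0)) (at p)"
proof -
  let ?L = "frechet_derivative f (at p)"
  have hd: "(f has_derivative ?L) (at p)" using df by (rule frechet_derivative_works[THEN iffD1])
  have lin: "linear ?L" using has_derivative_linear[OF hd] .
  have "?L v = 0" for v
  proof -
    have "?L v = ?L (fst v *\<^sub>R cdir None + (\<Sum>i\<in>UNIV. snd v $ i *\<^sub>R cdir (Some i)))"
      using pair_decomp[of v] by simp
    also have "\<dots> = fst v * ?L (cdir None) + (\<Sum>i\<in>UNIV. snd v $ i * ?L (cdir (Some i)))"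
      by (simp only: linear_add[OF lin] linear_sum[OF lin] linear_scale[OF lin] real_scaleR_def)
    also have "\<dots> = 0" using z unfolding pd_def by (simp del: cdir.simps)
    finally show ?thesis .
  qed
  then have "?L = (\<lambda>v. 0)" by (simp add: fun_eq_iff)
  then show ?thesis using hd by simp
qed

lemma lco_s0: "lco A B (s, 0) h a c = lco A B (s, 0) (0, 0) a c"
  by (cases a; cases c) (simp_all add: lco_def)

lemma rco_s0: "rco A B g (s, 0) a c = rco A B (0, 0) (s, 0) a c"
  by (cases a; cases c) (simp_all add: rco_def)

lemma lco_fst: "lco A B g h a c = lco A B g (fst h, 0) a c"
  by (cases a; cases c) (simp_all add: lco_def)

lemma rco_fst: "rco A B g h a c = rco A B (fst g, 0) h a c"
  by (cases a; cases c) (simp_all add: rco_def)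

lemma lco_unit: "lco A B gunit gunit a c = (if a = c then 1 else 0)"
  by (cases a; cases c) (simp_all add: lco_def gunit_def mexp_0 mat_def)

lemma rco_unit: "rco A B gunit gunit a c = (if a = c then 1 else 0)"
  by (cases a; cases c) (simp_all add: rco_def gunit_def mexp_0 mat_def)

lemma delta_sum2:
  fixes X :: "'a::finite \<Rightarrow> 'b::finite \<Rightarrow> real"
  shows "(\<Sum>c\<in>UNIV. \<Sum>d\<in>UNIV. (if a = c then 1 else 0) * (if b = d then 1 else 0) * (X c d :: real)) = X a b"
  by (simp add: ifz_mult sum_if_const sum.delta' cong: if_cong)

lemma rco_diff1: "\<exists>e. ((\<lambda>\<sigma>. rco A B (0, 0) (\<sigma>, 0) a c) has_real_derivative e) (at 0)"
proof (cases a)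
  case None then show ?thesis by (rule_tac exI[of _ 0]) (simp add: rco_def)
next
  case (Some i)
  then show ?thesis
  proof (cases c)
    case None then show ?thesis using Some by (auto simp: rco_def intro!: exI[of _ 0] DERIV_const)
  next
    case (Some j)
    then show ?thesis using \<open>a = Some i\<close> mexp_neg_entry_deriv[of B i j 0] by (auto simp: rco_def)
  qed
qed

lemma rco_diff2: "\<exists>e. ((\<lambda>\<sigma>. rco A B (0, 0) (0, \<sigma> *\<^sub>R y) a c) has_real_derivative e) (at 0)"
proof (cases a)
  case None then show ?thesis by (rule_tac exI[of _ 0]) (simp add: rco_def)
next
  case (Some i)
  then show ?thesis
  proof (cases c)
    case None
    have "((\<lambda>\<sigma>. \<sigma> * ((A ** mexp (0 *\<^sub>R A)) *v y) $ i) has_real_derivative ((A ** mexp (0 *\<^sub>R A)) *v y) $ i) (at 0)"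
      by (auto intro!: derivative_eq_intros)
    then show ?thesis using Some None by (auto simp: rco_def matrix_vector_mult_scaleR)
  next
    case (Some j)
    then show ?thesis using \<open>a = Some i\<close> by (auto simp: rco_def intro!: exI[of _ 0] DERIV_const)
  qed
qed

lemma uniqueness:
  fixes A B W :: "real^'n^'n" and C :: "'n \<Rightarrow> 'n \<Rightarrow> 'n \<Rightarrow> real"
  assumes J: "lie_structure_constants C" and Wc: "lie_2cocycle C W"
    and A: "is_derivation C A" and B: "is_derivation C B" and AB: "A ** B = B ** A"
    and PL: "poisson_lie_with_cocycle A B C W P"
  shows "P = claimed_bracket A B C W"
proof -
  let ?Q = "claimed_bracket A B C W"
  define D where "D p a b = P p a b - ?Q p a b" for p a b
  have QL: "poisson_lie_with_cocycle A B C W ?Q" by (rule claimed_PL[OF J Wc A B AB])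
  have Dmult: "D (gmul A B g h) a b = (\<Sum>c\<in>UNIV. \<Sum>d\<in>UNIV. lco A B g h a c * lco A B g h b d * D h c d)
      + (\<Sum>c\<in>UNIV. \<Sum>d\<in>UNIV. rco A B g h a c * rco A B g h b d * D g c d)" for g h a b
  proof -
    have p1: "P (gmul A B g h) a b = (\<Sum>c\<in>UNIV. \<Sum>d\<in>UNIV. lco A B g h a c * lco A B g h b d * P h c d)
      + (\<Sum>c\<in>UNIV. \<Sum>d\<in>UNIV. rco A B g h a c * rco A B g h b d * P g c d)"
      using PL unfolding poisson_lie_with_cocycle_def multiplicative_def pd_left pd_right by blast
    have q1: "?Q (gmul A B g h) a b = (\<Sum>c\<in>UNIV. \<Sum>d\<in>UNIV. lco A B g h a c * lco A B g h b d * ?Q h c d)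
      + (\<Sum>c\<in>UNIV. \<Sum>d\<in>UNIV. rco A B g h a c * rco A B g h b d * ?Q g c d)"
      using QL unfolding poisson_lie_with_cocycle_def multiplicative_def pd_left pd_right by blast
    show ?thesis unfolding D_def p1 q1 by (simp add: right_diff_distrib sum_subtractf)
  qed
  have Pdiff: "(\<lambda>p. P p a b) differentiable (at p)" for a b p
  proof -
    have "smooth_fun (\<lambda>p. P p a b)" using PL unfolding poisson_lie_with_cocycle_def poisson_bivector_def by blast
    then have "Ck (Suc 0) (\<lambda>p. P p a b)" unfolding smooth_fun_def by blast
    then show ?thesis by (cases p) simp
  qed
  have Qdiff: "(\<lambda>p. ?Q p a b) differentiable (at p)" for a b p
  proof -
    have "Ck (Suc 0) (\<lambda>p. ?Q p a b)" using claimed_smooth[OF AB] unfolding smooth_fun_def by blast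
    then show ?thesis by (cases p) simp
  qed
  have Dpd: "pd c (\<lambda>p. D p a b) gunit = 0" for a b c
  proof -
    have hP: "((\<lambda>p. P p a b) has_derivative frechet_derivative (\<lambda>p. P p a b) (at gunit)) (at gunit)"
      using Pdiff frechet_derivative_works by blast
    have hQ: "((\<lambda>p. ?Q p a b) has_derivative frechet_derivative (\<lambda>p. ?Q p a b) (at gunit)) (at gunit)"
      using Qdiff frechet_derivative_works by blast
    have hD: "((\<lambda>p. D p a b) has_derivative (\<lambda>v. frechet_derivative (\<lambda>p. P p a b) (at gunit) v
        - frechet_derivative (\<lambda>p. ?Q p a b) (at gunit) v)) (at gunit)"
      unfolding D_def by (rule has_derivative_diff[OF hP hQ])
    have "pd c (\<lambda>p. D p a b) gunit = pd c (\<lambda>p. P p a b) gunit - pd c (\<lambda>p. ?Q p a b) gunit"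
      unfolding pd_def frechet_derivative_at[OF hD, symmetric] ..
    also have "\<dots> = 0"
      using PL QL unfolding poisson_lie_with_cocycle_def has_cocycle_def by simp
    finally show ?thesis .
  qed
  have Dz: "((\<lambda>p. D p a b) has_derivative (\<lambda>v. 0)) (at gunit)" for a b
    by (rule zero_deriv_from_pd) (use Pdiff Qdiff Dpd in \<open>auto simp: D_def intro: differentiable_diff\<close>)
  have D0: "D gunit a b = 0" for a b
  proof -
    have gg: "gmul A B gunit gunit = gunit" by (simp add: gmul_def gunit_def)
    have "D gunit a b = D gunit a b + D gunit a b"
      using Dmult[of gunit gunit a b] unfolding gg lco_unit rco_unit delta_sum2 .
    then show ?thesis by simp
  qed
  have DT: "D (t, 0) a b = 0" for t a b
  proof (rule curve_zero[where u="\<lambda>s a b. D (s, 0) a b" and w="\<lambda>\<sigma> c d. D (\<sigma>, 0) c d"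
        and l="\<lambda>s a b c d. lco A B (s, 0) (0, 0) a c * lco A B (s, 0) (0, 0) b d"
        and r="\<lambda>\<sigma> a b c d. rco A B (0, 0) (\<sigma>, 0) a c * rco A B (0, 0) (\<sigma>, 0) b d"])
    fix s \<sigma> a b
    have "gmul A B (s, 0) (\<sigma>, 0) = (s + \<sigma>, 0)" by (simp add: gmul_def)
    then show "D (s + \<sigma>, 0) a b = (\<Sum>c\<in>UNIV. \<Sum>d\<in>UNIV. (lco A B (s, 0) (0, 0) a c * lco A B (s, 0) (0, 0) b d) * D (\<sigma>, 0) c d)
       + (\<Sum>c\<in>UNIV. \<Sum>d\<in>UNIV. (rco A B (0, 0) (\<sigma>, 0) a c * rco A B (0, 0) (\<sigma>, 0) b d) * D (s, 0) c d)"
      using Dmult[of "(s, 0)" "(\<sigma>, 0)" a b] by (simp add: lco_s0[of A B s "(\<sigma>, 0)"] rco_s0[of A B "(s, 0)" \<sigma>])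
  next
    fix c d
    have h1: "((\<lambda>\<sigma>::real. (\<sigma>, 0::real^'n)) has_derivative (\<lambda>x. (x, 0))) (at 0)"
      by (intro has_derivative_Pair has_derivative_ident has_derivative_const)
    have "((\<lambda>\<sigma>. D (\<sigma>, 0) c d) has_derivative (\<lambda>x. 0)) (at 0)"
      using has_derivative_compose[OF h1, of "\<lambda>p. D p c d" "\<lambda>v. 0"]
        Dz[of c d] by (simp add: gunit_def)
    then show "((\<lambda>\<sigma>. D (\<sigma>, 0) c d) has_real_derivative 0) (at 0)"
      unfolding has_field_derivative_def by (rule has_derivative_eq_rhs) (simp add: fun_eq_iff)
  next
    fix a b c d
    show "\<exists>e. ((\<lambda>\<sigma>. rco A B (0, 0) (\<sigma>, 0) a c * rco A B (0, 0) (\<sigma>, 0) b d) has_real_derivative e) (at 0)"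
    proof -
      obtain e1 where e1: "((\<lambda>\<sigma>. rco A B (0, 0) (\<sigma>, 0) a c) has_real_derivative e1) (at 0)"
        using rco_diff1[of A B a c] by blast
      obtain e2 where e2: "((\<lambda>\<sigma>. rco A B (0, 0) (\<sigma>, 0) b d) has_real_derivative e2) (at 0)"
        using rco_diff1[of A B b d] by blast
      show ?thesis using DERIV_mult[OF e1 e2] by blast
    qed
  next
    fix a b show "D (0, 0) a b = 0" using D0 by (simp add: gunit_def)
  qed
  have DY: "D (0, y) a b = 0" for y a b
  proof -
    have "D (0, 1 *\<^sub>R y) a b = 0"
    proof (rule curve_zero[where u="\<lambda>s a b. D (0, s *\<^sub>R y) a b" and w="\<lambda>\<sigma> c d. D (0, \<sigma> *\<^sub>R y) c d"
        and l="\<lambda>s a b c d. lco A B (0, s *\<^sub>R y) (0, 0) a c * lco A B (0, s *\<^sub>R y) (0, 0) b d"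
        and r="\<lambda>\<sigma> a b c d. rco A B (0, 0) (0, \<sigma> *\<^sub>R y) a c * rco A B (0, 0) (0, \<sigma> *\<^sub>R y) b d"])
      fix s \<sigma> a b
      have "gmul A B (0, s *\<^sub>R y) (0, \<sigma> *\<^sub>R y) = (0, (s + \<sigma>) *\<^sub>R y)"
        by (simp add: gmul_def mexp_0 scaleR_add_left)
      then show "D (0, (s + \<sigma>) *\<^sub>R y) a b = (\<Sum>c\<in>UNIV. \<Sum>d\<in>UNIV. (lco A B (0, s *\<^sub>R y) (0, 0) a c * lco A B (0, s *\<^sub>R y) (0, 0) b d) * D (0, \<sigma> *\<^sub>R y) c d)
         + (\<Sum>c\<in>UNIV. \<Sum>d\<in>UNIV. (rco A B (0, 0) (0, \<sigma> *\<^sub>R y) a c * rco A B (0, 0) (0, \<sigma> *\<^sub>R y) b d) * D (0, s *\<^sub>R y) c d)"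
        using Dmult[of "(0, s *\<^sub>R y)" "(0, \<sigma> *\<^sub>R y)" a b]
        by (simp add: lco_fst[of A B "(0, s *\<^sub>R y)" "(0, \<sigma> *\<^sub>R y)"] rco_fst[of A B "(0, s *\<^sub>R y)" "(0, \<sigma> *\<^sub>R y)"])
    next
      fix c d
      have h1: "((\<lambda>\<sigma>::real. (0::real, \<sigma> *\<^sub>R y)) has_derivative (\<lambda>x. (0, x *\<^sub>R y))) (at 0)"
        by (intro has_derivative_Pair has_derivative_const bounded_linear_imp_has_derivative bounded_linear_scaleR_left)
      have "((\<lambda>\<sigma>. D (0, \<sigma> *\<^sub>R y) c d) has_derivative (\<lambda>x. 0)) (at 0)"
        using has_derivative_compose[OF h1, of "\<lambda>p. D p c d" "\<lambda>v. 0"]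
          Dz[of c d] by (simp add: gunit_def)
      then show "((\<lambda>\<sigma>. D (0, \<sigma> *\<^sub>R y) c d) has_real_derivative 0) (at 0)"
        unfolding has_field_derivative_def by (rule has_derivative_eq_rhs) (simp add: fun_eq_iff)
    next
      fix a b c d
      show "\<exists>e. ((\<lambda>\<sigma>. rco A B (0, 0) (0, \<sigma> *\<^sub>R y) a c * rco A B (0, 0) (0, \<sigma> *\<^sub>R y) b d) has_real_derivative e) (at 0)"
      proof -
        obtain e1 where e1: "((\<lambda>\<sigma>. rco A B (0, 0) (0, \<sigma> *\<^sub>R y) a c) has_real_derivative e1) (at 0)"
          using rco_diff2[of A B y a c] by blast
        obtain e2 where e2: "((\<lambda>\<sigma>. rco A B (0, 0) (0, \<sigma> *\<^sub>R y) b d) has_real_derivative e2) (at 0)"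
          using rco_diff2[of A B y b d] by blast
        show ?thesis using DERIV_mult[OF e1 e2] by blast
      qed
    next
      fix a b show "D (0, 0 *\<^sub>R y) a b = 0" using D0 by (simp add: gunit_def)
    qed
    then show ?thesis by simp
  qed
  have "D p a b = 0" for p a b
  proof -
    obtain t x where p: "p = (t, x)" by fastforce
    define y where "y = mexp (t *\<^sub>R B) *v x"
    have "gmul A B (0, y) (t, 0) = (t, (mexp ((-t) *\<^sub>R B) ** mexp (t *\<^sub>R B)) *v x)"
      by (simp add: gmul_def y_def matrix_vector_mul_assoc)
    also have "\<dots> = p" using mexp_neg[of t B] by (simp add: p)
    finally have gp: "gmul A B (0, y) (t, 0) = p" .
    show ?thesis using Dmult[of "(0, y)" "(t, 0)" a b] unfolding gp by (simp add: DT DY)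
  qed
  then show ?thesis by (simp add: fun_eq_iff D_def)
qed

theorem theorem1:
  fixes C :: "'n::finite \<Rightarrow> 'n \<Rightarrow> 'n \<Rightarrow> real"
    and W A B :: "real^'n^'n"
  assumes "lie_structure_constants C"
    and "lie_2cocycle C W"
    and "is_derivation C A"
    and "is_derivation C B"
    and "A ** B = B ** A"
  shows "poisson_lie_with_cocycle A B C W (claimed_bracket A B C W)
         \<and> (\<forall>P. poisson_lie_with_cocycle A B C W P \<longrightarrow> P = claimed_bracket A B C W)"
proof (intro conjI allI impI)
  show "poisson_lie_with_cocycle A B C W (claimed_bracket A B C W)"
    by (rule claimed_PL[OF assms])
next
  fix P assume "poisson_lie_with_cocycle A B C W P"
  then show "P = claimed_bracket A B C W" by (rule uniqueness[OF assms])
qed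

end
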